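(* Let $G$ be a compact Lie group with Lie algebra $\mathfrak{g}$ and bi-invariant metric $\langle\cdot,\cdot\rangle_0$, let $K\subseteq G$ be a closed subgroup with Lie algebra $\mathfrak{k}$, let $\mathfrak{p}=\mathfrak{k}^{\perp}$ with respect to $\langle\cdot,\cdot\rangle_0$, fix $t>0$, set $\phi(X)=X_{\mathfrak{p}}+\frac{t}{t+1}X_{\mathfrak{k}}$ and let $\langle\cdot,\cdot\rangle_1$ be the left-invariant metric on $G$ with $\langle X,Y\rangle_1=\langle\phi(X),Y\rangle_0$ for $X,Y\in\mathfrak{g}$. Let $U\subseteq K\times K$ be a closed subgroup with Lie algebra $\mathfrak{u}\subseteq\mathfrak{g}\oplus\mathfrak{g}$ such that the action of $U$ on $G$ given by $(u_1,u_2)\cdot g=u_1gu_2^{-1}$ is free. Let $\Delta G\times U$ act on $G\times G$ (with product metric $\langle\cdot,\cdot\rangle_1+\langle\cdot,\cdot\rangle_1$) by $(g,(u_1,u_2))\cdot(g_1,g_2)=(gg_1u_1^{-1},gg_2u_2^{-1})$. For $g_1\in G$, let $\mathcal{H}_{g_1}$ be the horizontal space (orthogonal complement of the tangent space of the orbit) at $(g_1,e)$, and let $(L_{g_1^{-1}})_*\mathcal{H}_{g_1}\subseteq\mathfrak{g}\oplus\mathfrak{g}$ be its left translate to $(e,e)$. Then $$(L_{g_1^{-1}})_*\mathcal{H}_{g_1}=\{(\phi^{-1}(-\mathrm{Ad}_{g_1^{-1}}X),\phi^{-1}(X)) : X\in\mathfrak{g},\ \langle X,\mathrm{Ad}_{g_1}U_1-U_2\rangle_0=0\text{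 for all }(U_1,U_2)\in\mathfrak{u}\}.$$
   Context: The metric $\langle\cdot,\cdot\rangle_1$ is the Cheeger deformation of $\langle\cdot,\cdot\rangle_0$ in the direction of $K$; it is left $G$-invariant and right $K$-invariant, so the stated action is isometric. Subscripts $\mathfrak{k},\mathfrak{p}$ denote the components in the orthogonal decomposition $\mathfrak{g}=\mathfrak{k}\oplus\mathfrak{p}$. *)

theory Defs
  imports "HOL-Analysis.Analysis"
begin

type_synonym 'n mat = "real^'n^'n"

primrec mpow :: "'n::finite mat \<Rightarrow> nat \<Rightarrow> 'n mat" where
  "mpow X 0 = mat 1"
| "mpow X (Suc k) = X ** mpow X k"

definition mexp :: "'n::finite mat \<Rightarrow> 'n mat" where
  "mexp X = (\<Sum>k. (1 / fact k) *\<^sub>R mpow X k)"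

definition closed_matrix_group :: "'n::finite mat set \<Rightarrow> bool" where
  "closed_matrix_group G \<longleftrightarrow> closed G \<and> mat 1 \<in> G \<and>
     (\<forall>a\<in>G. \<forall>b\<in>G. a ** b \<in> G) \<and>
     (\<forall>a\<in>G. invertible a \<and> matrix_inv a \<in> G)"

definition lie_alg :: "'n::finite mat set \<Rightarrow> 'n mat set" where
  "lie_alg G = {X. \<forall>s::real. mexp (s *\<^sub>R X) \<in> G}"

definition closed_pair_group :: "('n::finite mat \<times> 'n mat) set \<Rightarrow> bool" where
  "closed_pair_group U \<longleftrightarrow> closed U \<and> (mat 1, mat 1) \<in> U \<and>
     (\<forall>(a1,a2)\<in>U. \<forall>(b1,b2)\<in>U. (a1 ** b1, a2 ** b2) \<in> U) \<and>
     (\<forall>(a1,a2)\<in>U. invertible a1 \<and> invertible a2 \<and> (matrix_inv a1, matrix_inv a2) \<in> U)"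

definition lie_alg_pair :: "('n::finite mat \<times> 'n mat) set \<Rightarrow> ('n mat \<times> 'n mat) set" where
  "lie_alg_pair U = {(X1, X2). \<forall>s::real. (mexp (s *\<^sub>R X1), mexp (s *\<^sub>R X2)) \<in> U}"

definition Ad :: "'n::finite mat \<Rightarrow> 'n mat \<Rightarrow> 'n mat" where
  "Ad g X = g ** X ** matrix_inv g"

definition tangent_space :: "'a::real_normed_vector set \<Rightarrow> 'a \<Rightarrow> 'a set" where
  "tangent_space S p = {v. \<exists>\<gamma>::real \<Rightarrow> 'a. \<gamma> 0 = p \<and> (\<forall>s. \<gamma> s \<in> S) \<and>
                                  (\<gamma> has_vector_derivative v) (at 0)}"

definition perp_in :: "('n::finite mat \<Rightarrow> 'n mat \<Rightarrow> real) \<Rightarrow> 'n mat set \<Rightarrow> 'n mat set \<Rightarrow> 'n mat set" where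
  "perp_in B g k = {X \<in> g. \<forall>Y\<in>k. B X Y = 0}"

definition kcomp :: "('n::finite mat \<Rightarrow> 'n mat \<Rightarrow> real) \<Rightarrow> 'n mat set \<Rightarrow> 'n mat set \<Rightarrow> 'n mat \<Rightarrow> 'n mat" where
  "kcomp B g k X = (THE Y. Y \<in> k \<and> X - Y \<in> perp_in B g k)"

definition pcomp :: "('n::finite mat \<Rightarrow> 'n mat \<Rightarrow> real) \<Rightarrow> 'n mat set \<Rightarrow> 'n mat set \<Rightarrow> 'n mat \<Rightarrow> 'n mat" where
  "pcomp B g k X = X - kcomp B g k X"

definition cheeger_phi :: "('n::finite mat \<Rightarrow> 'n mat \<Rightarrow> real) \<Rightarrow> 'n mat set \<Rightarrow> 'n mat set \<Rightarrow> real \<Rightarrow> 'n mat \<Rightarrow> 'n mat" where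
  "cheeger_phi B g k t X = pcomp B g k X + (t / (t + 1)) *\<^sub>R kcomp B g k X"

definition metric1 :: "('n::finite mat \<Rightarrow> 'n mat \<Rightarrow> real) \<Rightarrow> 'n mat set \<Rightarrow> 'n mat set \<Rightarrow> real
    \<Rightarrow> 'n mat \<Rightarrow> 'n mat \<Rightarrow> 'n mat \<Rightarrow> real" where
  "metric1 B g k t a v w = B (cheeger_phi B g k t (matrix_inv a ** v)) (matrix_inv a ** w)"

definition metric1_prod :: "('n::finite mat \<Rightarrow> 'n mat \<Rightarrow> real) \<Rightarrow> 'n mat set \<Rightarrow> 'n mat set \<Rightarrow> real
    \<Rightarrow> 'n mat \<times> 'n mat \<Rightarrow> 'n mat \<times> 'n mat \<Rightarrow> 'n mat \<times> 'n mat \<Rightarrow> real" where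
  "metric1_prod B g k t p v w =
     metric1 B g k t (fst p) (fst v) (fst w) + metric1 B g k t (snd p) (snd v) (snd w)"

definition act :: "'n::finite mat \<Rightarrow> 'n mat \<times> 'n mat \<Rightarrow> 'n mat \<times> 'n mat \<Rightarrow> 'n mat \<times> 'n mat" where
  "act g u x = (g ** fst x ** matrix_inv (fst u), g ** snd x ** matrix_inv (snd u))"

definition orbit :: "'n::finite mat set \<Rightarrow> ('n mat \<times> 'n mat) set \<Rightarrow> 'n mat \<times> 'n mat \<Rightarrow> ('n mat \<times> 'n mat) set" where
  "orbit G U x = {act g u x | g u. g \<in> G \<and> u \<in> U}"

definition horizontal :: "('n::finite mat \<Rightarrow> 'n mat \<Rightarrow> real) \<Rightarrow> 'n mat set \<Rightarrow> 'n mat set \<Rightarrow> real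
    \<Rightarrow> ('n mat \<times> 'n mat) set \<Rightarrow> 'n mat \<times> 'n mat \<Rightarrow> ('n mat \<times> 'n mat) set" where
  "horizontal B G K t U x =
     {v \<in> tangent_space (G \<times> G) x. \<forall>w \<in> tangent_space (orbit G U x) x.
        metric1_prod B (lie_alg G) (lie_alg K) t x v w = 0}"

end

theory Submission
  imports Defs
begin

lemma matrix_add_rdistrib': "((A::real^'n^'m) + B) ** C = A ** C + B ** C"
  by (vector matrix_matrix_mult_def sum.distrib[symmetric] field_simps)

lemma matrix_diff_ldistrib': "(A::real^'n^'m) ** (B - C) = A ** B - A ** C"
  by (vector matrix_matrix_mult_def sum_subtractf[symmetric] field_simps)

lemma matrix_diff_rdistrib': "((A::real^'n^'m) - B) ** C = A ** C - B ** C"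
  by (vector matrix_matrix_mult_def sum_subtractf[symmetric] field_simps)

lemma matrix_neg_left': "(- (A::real^'n^'m)) ** C = - (A ** C)"
  by (vector matrix_matrix_mult_def sum_negf[symmetric])

lemma matrix_neg_right': "(A::real^'n^'m) ** (- C) = - (A ** C)"
  by (vector matrix_matrix_mult_def sum_negf[symmetric])

lemma matrix_scaleR_left': "(c *\<^sub>R (A::real^'n^'m)) ** C = c *\<^sub>R (A ** C)"
  by (simp add: scalar_matrix_assoc)

lemma matrix_scaleR_right': "(A::real^'n^'m) ** (c *\<^sub>R C) = c *\<^sub>R (A ** C)"
  by (simp add: matrix_scalar_ac scalar_matrix_assoc)

lemma bilinear_mmult: "bilinear (\<lambda>(A::real^'n^'m) (B::real^'k^'n). A ** B)"
  unfolding bilinear_def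
  by (auto simp: linear_iff matrix_add_ldistrib matrix_add_rdistrib' matrix_scaleR_left' matrix_scaleR_right')

lemma bounded_bilinear_mmult: "bounded_bilinear (\<lambda>(A::real^'n^'m) (B::real^'k^'n). A ** B)"
  using bilinear_conv_bounded_bilinear bilinear_mmult by blast

typedef (overloaded) ('n::finite) sqm = "UNIV :: (real^'n^'n) set"
  morphisms Rep_sqm Abs_sqm by auto

lemmas Rep_sqm_inv = Rep_sqm_inverse
lemmas Abs_sqm_inv = Abs_sqm_inverse[OF UNIV_I]

instantiation sqm :: (finite) ring_1
begin
definition zero_sqm_def: "0 = Abs_sqm 0"
definition one_sqm_def: "1 = Abs_sqm (mat 1)"
definition plus_sqm_def: "a + b = Abs_sqm (Rep_sqm a + Rep_sqm b)"
definition minus_sqm_def: "a - b = Abs_sqm (Rep_sqm a - Rep_sqm b)"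
definition uminus_sqm_def: "- a = Abs_sqm (- Rep_sqm a)"
definition times_sqm_def: "a * b = Abs_sqm (Rep_sqm a ** Rep_sqm b)"
instance
proof
  fix a b c :: "'a::finite sqm"
  note defs = zero_sqm_def one_sqm_def plus_sqm_def minus_sqm_def uminus_sqm_def times_sqm_def
  show "a + b + c = a + (b + c)" by (simp add: defs Abs_sqm_inv add.assoc)
  show "a + b = b + a" by (simp add: defs Abs_sqm_inv add.commute)
  show "0 + a = a" by (simp add: defs Abs_sqm_inv Rep_sqm_inv)
  show "- a + a = 0" by (simp add: defs Abs_sqm_inv Rep_sqm_inv)
  show "a - b = a + - b" by (simp add: defs Abs_sqm_inv)
  show "a * b * c = a * (b * c)" by (simp add: defs Abs_sqm_inv matrix_mul_assoc)
  show "(a + b) * c = a * c + b * c" by (simp add: defs Abs_sqm_inv matrix_add_rdistrib')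
  show "a * (b + c) = a * b + a * c" by (simp add: defs Abs_sqm_inv matrix_add_ldistrib)
  show "1 * a = a" by (simp add: defs Abs_sqm_inv Rep_sqm_inv)
  show "a * 1 = a" by (simp add: defs Abs_sqm_inv Rep_sqm_inv)
  show "(0::'a sqm) \<noteq> 1"
  proof
    assume h: "(0::'a sqm) = 1"
    have "onorm (\<lambda>v. Rep_sqm (0::'a sqm) *v v) = 0"
      by (simp add: zero_sqm_def Abs_sqm_inv onorm_zero)
    moreover have "onorm (\<lambda>v. Rep_sqm (1::'a sqm) *v v) = 1"
      by (simp add: one_sqm_def Abs_sqm_inv onorm_id)
    ultimately show False using h by simp
  qed
qed
end

instantiation sqm :: (finite) real_algebra_1
begin
definition scaleR_sqm_def: "scaleR r a = Abs_sqm (r *\<^sub>R Rep_sqm a)"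
instance
proof
  fix a b :: "'a::finite sqm" and r s :: real
  note defs = zero_sqm_def one_sqm_def plus_sqm_def minus_sqm_def uminus_sqm_def times_sqm_def scaleR_sqm_def
  show "r *\<^sub>R (a + b) = r *\<^sub>R a + r *\<^sub>R b" by (simp add: defs Abs_sqm_inv scaleR_add_right)
  show "(r + s) *\<^sub>R a = r *\<^sub>R a + s *\<^sub>R a" by (simp add: defs Abs_sqm_inv scaleR_add_left)
  show "r *\<^sub>R s *\<^sub>R a = (r * s) *\<^sub>R a" by (simp add: defs Abs_sqm_inv)
  show "1 *\<^sub>R a = a" by (simp add: defs Abs_sqm_inv Rep_sqm_inv)
  show "r *\<^sub>R a * b = r *\<^sub>R (a * b)" by (simp add: defs Abs_sqm_inv matrix_scaleR_left')
  show "a * r *\<^sub>R b = r *\<^sub>R (a * b)" by (simp add: defs Abs_sqm_inv matrix_scaleR_right')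
qed
end

instantiation sqm :: (finite) real_normed_algebra_1
begin
definition norm_sqm_def: "norm a = onorm (\<lambda>v. Rep_sqm a *v v)"
definition sgn_sqm_def: "sgn (a::'a::finite sqm) = a /\<^sub>R norm a"
definition dist_sqm_def: "dist (a::'a::finite sqm) b = norm (a - b)"
definition uniformity_sqm_def: "uniformity = (INF e\<in>{0<..}. principal {(x::'a::finite sqm, y). dist x y < e})"
definition open_sqm_def: "open (U::'a::finite sqm set) = (\<forall>x\<in>U. \<forall>\<^sub>F (x', y) in uniformity. x' = x \<longrightarrow> y \<in> U)"
instance
proof
  fix a b :: "'a::finite sqm" and r :: real and U :: "'a::finite sqm set"
  note defs = zero_sqm_def one_sqm_def plus_sqm_def minus_sqm_def uminus_sqm_def times_sqm_def scaleR_sqm_def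
  show "sgn a = a /\<^sub>R norm a" by (simp add: sgn_sqm_def)
  show "dist a b = norm (a - b)" by (simp add: dist_sqm_def)
  show "(uniformity :: ('a sqm \<times> 'a sqm) filter) = (INF e\<in>{0<..}. principal {(x, y). dist x y < e})"
    by (simp add: uniformity_sqm_def)
  show "open U = (\<forall>x\<in>U. \<forall>\<^sub>F (x', y) in uniformity. x' = x \<longrightarrow> y \<in> U)"
    by (simp add: open_sqm_def)
  show "(norm a = 0) = (a = 0)"
  proof -
    have "(norm a = 0) = (\<forall>v. Rep_sqm a *v v = 0)"
      unfolding norm_sqm_def by (simp add: onorm_eq_0)
    also have "\<dots> = (Rep_sqm a = 0)"
      by (metis matrix_eq matrix_vector_mult_0)
    also have "\<dots> = (a = 0)"
      by (metis Abs_sqm_inv Rep_sqm_inv zero_sqm_def)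
    finally show ?thesis .
  qed
  show "norm (a + b) \<le> norm a + norm b"
    unfolding norm_sqm_def plus_sqm_def Abs_sqm_inv
    using onorm_triangle[OF matrix_vector_mul_bounded_linear[of "Rep_sqm a"] matrix_vector_mul_bounded_linear[of "Rep_sqm b"]]
    by (simp add: matrix_vector_mult_add_rdistrib[symmetric])
  show "norm (r *\<^sub>R a) = \<bar>r\<bar> * norm a"
    unfolding norm_sqm_def scaleR_sqm_def Abs_sqm_inv
    using onorm_scaleR[OF matrix_vector_mul_bounded_linear[of "Rep_sqm a"], of r]
    by (simp add: scaleR_matrix_vector_assoc)
  show "norm (a * b) \<le> norm a * norm b"
    unfolding norm_sqm_def times_sqm_def Abs_sqm_inv
    using onorm_compose[OF matrix_vector_mul_bounded_linear[of "Rep_sqm a"] matrix_vector_mul_bounded_linear[of "Rep_sqm b"]]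
    by (simp add: o_def matrix_vector_mul_assoc)
  show "norm (1::'a sqm) = 1"
  proof -
    have "(*v) (mat 1 :: real^'a^'a) = (\<lambda>x. x)" by (rule ext) simp
    thus ?thesis unfolding norm_sqm_def one_sqm_def Abs_sqm_inv
      by (simp add: onorm_id)
  qed
qed
end

lemma Rep_sqm_simps:
  "Rep_sqm (a + b) = Rep_sqm a + Rep_sqm b"
  "Rep_sqm (a - b) = Rep_sqm a - Rep_sqm b"
  "Rep_sqm (- a) = - Rep_sqm a"
  "Rep_sqm (a * b) = Rep_sqm a ** Rep_sqm b"
  "Rep_sqm (r *\<^sub>R a) = r *\<^sub>R Rep_sqm a"
  "Rep_sqm 0 = 0"
  "Rep_sqm 1 = mat 1"
  by (simp_all add: zero_sqm_def one_sqm_def plus_sqm_def minus_sqm_def uminus_sqm_def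
      times_sqm_def scaleR_sqm_def Abs_sqm_inv)

lemma Rep_sqm_power: "Rep_sqm (a ^ k) = mpow (Rep_sqm a) k"
  by (induction k) (simp_all add: Rep_sqm_simps)

lemma norm_mat_le_sum: "norm (M::real^'n^'n) \<le> (\<Sum>i\<in>UNIV. \<Sum>j\<in>UNIV. \<bar>M $ i $ j\<bar>)"
proof -
  have "norm M = L2_set (\<lambda>i. norm (M $ i)) UNIV" by (simp add: norm_vec_def)
  also have "\<dots> \<le> (\<Sum>i\<in>UNIV. norm (M $ i))" by (rule L2_set_le_sum) simp
  also have "\<dots> \<le> (\<Sum>i\<in>UNIV. \<Sum>j\<in>UNIV. \<bar>M $ i $ j\<bar>)"
    by (rule sum_mono) (rule norm_le_l1_cart)
  finally show ?thesis .
qed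

lemma norm_Rep_sqm_le: "norm (Rep_sqm a) \<le> real (CARD('n)) * real (CARD('n)) * norm (a::'n::finite sqm)"
proof -
  have "norm (Rep_sqm a) \<le> (\<Sum>i\<in>(UNIV::'n set). \<Sum>j\<in>(UNIV::'n set). norm a)"
    using norm_mat_le_sum[of "Rep_sqm a"] matrix_component_le_onorm[of "Rep_sqm a"]
    unfolding norm_sqm_def
    by (meson order_trans sum_mono)
  thus ?thesis by simp
qed

lemma norm_Abs_sqm_le: "norm (Abs_sqm M :: 'n::finite sqm) \<le> norm M * (real (CARD('n)) * real (CARD('n)))"
proof -
  have "norm (Abs_sqm M :: 'n sqm) \<le> (\<Sum>i\<in>(UNIV::'n set). \<Sum>j\<in>(UNIV::'n set). \<bar>M $ i $ j\<bar>)"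
    unfolding norm_sqm_def Abs_sqm_inv by (rule onorm_le_matrix_component_sum)
  also have "\<dots> \<le> (\<Sum>i\<in>(UNIV::'n set). \<Sum>j\<in>(UNIV::'n set). norm M)"
    by (intro sum_mono) (rule order_trans[OF component_le_norm_cart Finite_Cartesian_Product.norm_nth_le])
  finally show ?thesis by (simp add: mult_ac)
qed

lemma bounded_linear_Rep_sqm: "bounded_linear (Rep_sqm :: 'n::finite sqm \<Rightarrow> _)"
  by (rule bounded_linear_intro[where K="real (CARD('n)) * real (CARD('n))"])
     (simp_all add: Rep_sqm_simps, metis mult.commute norm_Rep_sqm_le)

lemma bounded_linear_Abs_sqm: "bounded_linear (Abs_sqm :: _ \<Rightarrow> 'n::finite sqm)"
  by (rule bounded_linear_intro[where K="real (CARD('n)) * real (CARD('n))"])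
     (simp_all add: plus_sqm_def scaleR_sqm_def Abs_sqm_inv norm_Abs_sqm_le)

lemma tendsto_Rep_sqm_iff: "(f \<longlongrightarrow> l) F \<longleftrightarrow> ((\<lambda>x. Rep_sqm (f x)) \<longlongrightarrow> Rep_sqm l) F"
proof
  assume "(f \<longlongrightarrow> l) F"
  thus "((\<lambda>x. Rep_sqm (f x)) \<longlongrightarrow> Rep_sqm l) F"
    by (rule bounded_linear.tendsto[OF bounded_linear_Rep_sqm])
next
  assume "((\<lambda>x. Rep_sqm (f x)) \<longlongrightarrow> Rep_sqm l) F"
  from bounded_linear.tendsto[OF bounded_linear_Abs_sqm this]
  show "(f \<longlongrightarrow> l) F" by (simp add: Rep_sqm_inv)
qed

lemma tendsto_Abs_sqm_iff: "(f \<longlongrightarrow> l) F \<longleftrightarrow> ((\<lambda>x. Abs_sqm (f x) :: 'n::finite sqm) \<longlongrightarrow> Abs_sqm l) F"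
  by (simp add: tendsto_Rep_sqm_iff Abs_sqm_inv)

instance sqm :: (finite) banach
proof
  fix X :: "nat \<Rightarrow> 'a sqm"
  assume "Cauchy X"
  hence "Cauchy (\<lambda>n. Rep_sqm (X n))" by (rule bounded_linear.Cauchy[OF bounded_linear_Rep_sqm])
  then obtain L where "(\<lambda>n. Rep_sqm (X n)) \<longlonglongrightarrow> L" using Cauchy_convergent_iff convergent_def by blast
  hence "X \<longlonglongrightarrow> Abs_sqm L" by (simp add: tendsto_Rep_sqm_iff Abs_sqm_inv)
  thus "convergent X" by (auto simp: convergent_def)
qed

definition sq :: "real^'n^'n \<Rightarrow> 'n::finite sqm" where "sq = Abs_sqm"

lemma mexp_sqm: "mexp X = Rep_sqm (exp (Abs_sqm X))"
proof -
  have s: "summable (\<lambda>n. (Abs_sqm X) ^ n /\<^sub>R fact n)"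
    using exp_converges sums_summable by blast
  have "Rep_sqm (exp (Abs_sqm X)) = Rep_sqm (\<Sum>n. (Abs_sqm X) ^ n /\<^sub>R fact n)"
    by (simp add: exp_def)
  also have "\<dots> = (\<Sum>n. Rep_sqm ((Abs_sqm X) ^ n /\<^sub>R fact n))"
    using bounded_linear.suminf[OF bounded_linear_Rep_sqm s] by simp
  also have "\<dots> = mexp X"
    by (simp add: mexp_def Rep_sqm_simps Rep_sqm_power Abs_sqm_inv divide_inverse_commute)
  finally show ?thesis by simp
qed

lemma exp_sub_one_sub_bound:
  fixes x :: "'a::{real_normed_algebra_1,banach}"
  assumes "norm x \<le> 1"
  shows "norm (exp x - 1 - x) \<le> norm x ^ 2"
proof -
  let ?r = "norm x"
  have sn: "summable (\<lambda>n. norm (inverse (fact (n + 2)) *\<^sub>R (x ^ (n + 2))))"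
    using summable_ignore_initial_segment[OF summable_norm_exp[of x], of 2]
    by (simp add: divide_inverse_commute)
  have sr: "summable (\<lambda>n. inverse (fact (n + 2)) * (?r ^ (n + 2)))"
    using summable_ignore_initial_segment[OF summable_exp[of ?r], of 2] by simp
  have "exp x - 1 - x = (\<Sum>n. inverse (fact (n + 2)) *\<^sub>R (x ^ (n + 2)))"
    using exp_first_two_terms[of x] by (simp add: algebra_simps)
  hence "norm (exp x - 1 - x) \<le> (\<Sum>n. norm (inverse (fact (n + 2)) *\<^sub>R (x ^ (n + 2))))"
    using summable_norm[OF sn] by simp
  also have "\<dots> \<le> (\<Sum>n. inverse (fact (n + 2)) * (?r ^ (n + 2)))"
  proof (rule suminf_le[OF _ sn sr])
    fix n
    show "norm (inverse (fact (n + 2)) *\<^sub>R (x ^ (n + 2))) \<le> inverse (fact (n + 2)) * (?r ^ (n + 2))"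
    proof -
      have "norm (x ^ (n + 2)) \<le> ?r ^ (n + 2)" by (rule norm_power_ineq)
      thus ?thesis by (simp add: mult_left_mono del: power_Suc)
    qed
  qed
  also have "\<dots> = exp ?r - 1 - ?r"
    using exp_first_two_terms[of ?r] by simp
  also have "\<dots> \<le> ?r ^ 2" using exp_bound[of ?r] assms by simp
  finally show ?thesis .
qed

lemma power_diff_norm_bound:
  fixes a b :: "'a::real_normed_algebra_1"
  assumes "norm a \<le> M" "norm b \<le> M" "1 \<le> M"
  shows "norm (a ^ k - b ^ k) \<le> real k * M ^ k * norm (a - b)"
proof (induction k)
  case 0 thus ?case by simp
next
  case (Suc k)
  have eq: "a ^ Suc k - b ^ Suc k = a * (a ^ k - b ^ k) + (a - b) * b ^ k"
    by (simp add: algebra_simps)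
  have "norm (a * (a ^ k - b ^ k)) \<le> M * (real k * M ^ k * norm (a - b))"
    by (rule order_trans[OF norm_mult_ineq]) (rule mult_mono[OF assms(1) Suc], use assms in auto)
  moreover have "norm ((a - b) * b ^ k) \<le> norm (a - b) * M ^ k"
  proof -
    have "norm (b ^ k) \<le> M ^ k"
      by (rule order_trans[OF norm_power_ineq]) (rule power_mono[OF assms(2)], simp)
    thus ?thesis using order_trans[OF norm_mult_ineq mult_left_mono] by (metis norm_ge_zero)
  qed
  moreover have "M ^ k \<le> M ^ Suc k" using assms(3) by (simp add: power_increasing)
  ultimately have "norm (a ^ Suc k - b ^ Suc k) \<le> M * (real k * M ^ k * norm (a - b)) + norm (a - b) * M ^ Suc k"
    unfolding eq
    by (smt (verit) mult_left_mono norm_ge_zero norm_triangle_ineq)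
  also have "\<dots> = real (Suc k) * M ^ Suc k * norm (a - b)"
    by (simp add: algebra_simps)
  finally show ?case .
qed

lemma exp_scaleR_nat:
  fixes x :: "'a::{real_normed_algebra_1,banach}"
  shows "exp (real k *\<^sub>R x) = exp x ^ k"
proof (induction k)
  case 0 thus ?case by simp
next
  case (Suc k)
  have "real (Suc k) *\<^sub>R x = x + real k *\<^sub>R x" by (simp add: algebra_simps)
  moreover have "x * (real k *\<^sub>R x) = (real k *\<^sub>R x) * x" by simp
  ultimately show ?case using Suc by (simp add: exp_add_commuting)
qed

lemma exp_lipschitz:
  fixes a b :: "'a::{real_normed_algebra_1,banach}"
  assumes "norm a \<le> M" "norm b \<le> M" "1 \<le> M"
  shows "norm (exp a - exp b) \<le> exp (2 * M) * norm (a - b)"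
proof -
  have bd: "norm ((a ^ n - b ^ n) /\<^sub>R fact n) \<le> (2 * M) ^ n /\<^sub>R fact n * norm (a - b)" for n
  proof -
    have "norm (a ^ n - b ^ n) \<le> real n * M ^ n * norm (a - b)"
      by (rule power_diff_norm_bound[OF assms])
    also have "\<dots> \<le> 2 ^ n * M ^ n * norm (a - b)"
    proof -
      have "real n \<le> real (2 ^ n)" using less_exp[of n] by linarith
      hence "real n \<le> 2 ^ n" by simp
      thus ?thesis using assms(3) by (intro mult_right_mono) auto
    qed
    finally have "norm (a ^ n - b ^ n) \<le> 2 ^ n * M ^ n * norm (a - b)" .
    thus ?thesis by (simp add: power_mult_distrib mult_ac)
  qed
  have s2: "summable (\<lambda>n. (2 * M) ^ n /\<^sub>R fact n * norm (a - b))"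
    using summable_mult2[OF summable_exp[of "2*M"], of "norm (a - b)"] by (simp add: divide_inverse_commute)
  have sn: "summable (\<lambda>n. norm ((a ^ n - b ^ n) /\<^sub>R fact n))"
    by (rule summable_comparison_test[OF _ s2]) (use bd in auto)
  have "(\<lambda>n. a ^ n /\<^sub>R fact n - b ^ n /\<^sub>R fact n) sums (exp a - exp b)"
    by (intro sums_diff exp_converges)
  hence "exp a - exp b = (\<Sum>n. (a ^ n - b ^ n) /\<^sub>R fact n)"
    by (simp add: sums_iff scaleR_diff_right)
  hence "norm (exp a - exp b) \<le> (\<Sum>n. norm ((a ^ n - b ^ n) /\<^sub>R fact n))"
    using summable_norm[OF sn] by simp
  also have "\<dots> \<le> (\<Sum>n. (2 * M) ^ n /\<^sub>R fact n * norm (a - b))"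
    by (rule suminf_le[OF bd sn s2])
  also have "\<dots> = exp (2 * M) * norm (a - b)"
    using exp_converges[of "2*M"] by (simp add: suminf_mult2[symmetric] sums_iff)
  finally show ?thesis .
qed

lemma tendsto_exp_generic:
  fixes f :: "_ \<Rightarrow> 'a::{real_normed_algebra_1,banach}"
  assumes "(f \<longlongrightarrow> a) F"
  shows "((\<lambda>x. exp (f x)) \<longlongrightarrow> exp a) F"
proof -
  let ?M = "norm a + 2"
  have ev: "\<forall>\<^sub>F x in F. norm (f x - a) < 1"
    using assms by (auto simp: tendsto_iff dist_norm elim!: allE[of _ 1] eventually_mono)
  have "\<forall>\<^sub>F x in F. norm (exp (f x) - exp a) \<le> exp (2 * ?M) * norm (f x - a)"
  proof (rule eventually_mono[OF ev])
    fix x assume "norm (f x - a) < 1"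
    hence "norm (f x) \<le> ?M" using norm_triangle_sub[of "f x" a] by simp
    thus "norm (exp (f x) - exp a) \<le> exp (2 * ?M) * norm (f x - a)"
      by (intro exp_lipschitz) auto
  qed
  moreover have "((\<lambda>x. exp (2 * ?M) * norm (f x - a)) \<longlongrightarrow> exp (2 * ?M) * norm (a - a)) F"
    by (intro tendsto_intros assms)
  ultimately have d: "((\<lambda>x. exp (f x) - exp a) \<longlongrightarrow> 0) F"
    using Lim_null_comparison by fastforce
  have "((\<lambda>x. (exp (f x) - exp a) + exp a) \<longlongrightarrow> 0 + exp a) F"
    by (intro tendsto_add d tendsto_const)
  thus ?thesis by simp
qed

lemma exp_limit_generic:
  fixes x :: "nat \<Rightarrow> 'a::{real_normed_algebra_1,banach}"
  assumes x0: "x \<longlonglongrightarrow> 0" and kx: "(\<lambda>n. real (k n) *\<^sub>R x n) \<longlonglongrightarrow> z"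
  shows "(\<lambda>n. (1 + x n) ^ (k n)) \<longlonglongrightarrow> exp z"
proof -
  have ev: "\<forall>\<^sub>F n in sequentially. norm (x n) \<le> 1"
    using x0 by (auto simp: tendsto_iff dist_norm elim!: allE[of _ 1] eventually_mono)
  have bound: "norm ((1 + x n) ^ (k n) - exp (real (k n) *\<^sub>R x n))
      \<le> norm (real (k n) *\<^sub>R x n) * exp (norm (real (k n) *\<^sub>R x n)) * norm (x n)"
    if "norm (x n) \<le> 1" for n
  proof -
    let ?M = "exp (norm (x n))"
    have e: "exp (real (k n) *\<^sub>R x n) = exp (x n) ^ (k n)"
      by (rule exp_scaleR_nat)
    have "norm (1 + x n) \<le> ?M"
      by (rule order_trans[OF norm_triangle_ineq]) (simp add: exp_ge_add_one_self add.commute)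
    moreover have "norm (exp (x n)) \<le> ?M" by (rule norm_exp)
    moreover have "1 \<le> ?M" by simp
    ultimately have "norm ((1 + x n) ^ (k n) - exp (x n) ^ (k n)) \<le> real (k n) * ?M ^ (k n) * norm ((1 + x n) - exp (x n))"
      by (rule power_diff_norm_bound)
    also have "norm ((1 + x n) - exp (x n)) \<le> norm (x n) ^ 2"
      using exp_sub_one_sub_bound[OF that] by (simp add: norm_minus_commute algebra_simps)
    hence "real (k n) * ?M ^ (k n) * norm ((1 + x n) - exp (x n)) \<le> real (k n) * ?M ^ (k n) * norm (x n) ^ 2"
      by (simp add: mult_left_mono)
    also have "?M ^ (k n) = exp (norm (real (k n) *\<^sub>R x n))"
      using exp_of_nat_mult[of "k n" "norm (x n)"] by simp
    also have "real (k n) * exp (norm (real (k n) *\<^sub>R x n)) * norm (x n) ^ 2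
        = norm (real (k n) *\<^sub>R x n) * exp (norm (real (k n) *\<^sub>R x n)) * norm (x n)"
      by (simp add: power2_eq_square)
    finally show ?thesis by (simp add: e)
  qed
  have "(\<lambda>n. norm (real (k n) *\<^sub>R x n) * exp (norm (real (k n) *\<^sub>R x n)) * norm (x n)) \<longlonglongrightarrow>
      norm z * exp (norm z) * norm (0::'a)"
    by (intro tendsto_intros kx x0)
  hence g0: "(\<lambda>n. norm (real (k n) *\<^sub>R x n) * exp (norm (real (k n) *\<^sub>R x n)) * norm (x n)) \<longlonglongrightarrow> 0"
    by simp
  have d: "(\<lambda>n. (1 + x n) ^ (k n) - exp (real (k n) *\<^sub>R x n)) \<longlonglongrightarrow> 0"
    by (rule Lim_null_comparison[OF eventually_mono[OF ev bound] g0])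
  have "(\<lambda>n. ((1 + x n) ^ (k n) - exp (real (k n) *\<^sub>R x n)) + exp (real (k n) *\<^sub>R x n)) \<longlonglongrightarrow> 0 + exp z"
    by (intro tendsto_add d tendsto_exp_generic kx)
  thus ?thesis by simp
qed

lemma Abs_sqm_simps:
  "Abs_sqm (A + B) = Abs_sqm A + Abs_sqm B"
  "Abs_sqm (A - B) = Abs_sqm A - Abs_sqm B"
  "Abs_sqm (- A) = - Abs_sqm A"
  "Abs_sqm (A ** B) = Abs_sqm A * Abs_sqm B"
  "Abs_sqm (r *\<^sub>R A) = r *\<^sub>R Abs_sqm A"
  "Abs_sqm 0 = 0"
  "Abs_sqm (mat 1) = 1"
  by (simp_all add: zero_sqm_def one_sqm_def plus_sqm_def minus_sqm_def uminus_sqm_def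
      times_sqm_def scaleR_sqm_def Abs_sqm_inv)

lemma matrix_inv_eq:
  fixes A B :: "real^'n^'n"
  assumes "A ** B = mat 1" "B ** A = mat 1"
  shows "matrix_inv A = B"
proof -
  have ex: "\<exists>A'. A ** A' = mat 1 \<and> A' ** A = mat 1" using assms by blast
  have uniq: "A' = B" if "A ** A' = mat 1 \<and> A' ** A = mat 1" for A'
  proof -
    have "A' = A' ** (A ** B)" by (simp add: assms)
    also have "\<dots> = (A' ** A) ** B" by (simp add: matrix_mul_assoc)
    also have "\<dots> = B" using that by simp
    finally show ?thesis .
  qed
  show ?thesis unfolding matrix_inv_def
    by (rule someI2_ex[OF ex]) (rule uniq)
qed

lemma matrix_inv_props:
  fixes A :: "real^'n^'n"
  assumes "invertible A"
  shows "A ** matrix_inv A = mat 1" "matrix_inv A ** A = mat 1"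
  using someI_ex[OF assms[unfolded invertible_def]] unfolding matrix_inv_def by auto

lemma invertible_matrix_inv:
  fixes A :: "real^'n^'n"
  assumes "invertible A"
  shows "invertible (matrix_inv A)" "matrix_inv (matrix_inv A) = A"
  using matrix_inv_props[OF assms] unfolding invertible_def
  by (auto intro: matrix_inv_eq)

lemma matrix_inv_mat1: "matrix_inv (mat 1 :: real^'n^'n) = mat 1"
  by (rule matrix_inv_eq) simp_all

lemma matrix_inv_mult:
  fixes A B :: "real^'n^'n"
  assumes "invertible A" "invertible B"
  shows "matrix_inv (A ** B) = matrix_inv B ** matrix_inv A"
proof (rule matrix_inv_eq)
  note a = matrix_inv_props[OF assms(1)] and b = matrix_inv_props[OF assms(2)]
  have "A ** B ** (matrix_inv B ** matrix_inv A) = A ** (B ** matrix_inv B) ** matrix_inv A"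
    by (simp add: matrix_mul_assoc)
  thus "A ** B ** (matrix_inv B ** matrix_inv A) = mat 1" using a b by simp
  have "matrix_inv B ** matrix_inv A ** (A ** B) = matrix_inv B ** (matrix_inv A ** A) ** B"
    by (simp add: matrix_mul_assoc)
  thus "matrix_inv B ** matrix_inv A ** (A ** B) = mat 1" using a b by simp
qed

lemma mexp_zero: "mexp 0 = mat 1"
  by (simp add: mexp_sqm Abs_sqm_simps Rep_sqm_simps)

lemma mexp_add_commuting:
  fixes A B :: "real^'n^'n"
  assumes "A ** B = B ** A"
  shows "mexp (A + B) = mexp A ** mexp B"
proof -
  have "Abs_sqm A * Abs_sqm B = Abs_sqm B * Abs_sqm A"
    using assms by (simp add: Abs_sqm_simps[symmetric])
  hence "exp (Abs_sqm A + Abs_sqm B) = exp (Abs_sqm A) * exp (Abs_sqm B)"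
    by (rule exp_add_commuting)
  thus ?thesis by (simp add: mexp_sqm Abs_sqm_simps Rep_sqm_simps)
qed

lemma mexp_scaleR_add: "mexp (s *\<^sub>R X) ** mexp (t *\<^sub>R X) = mexp ((s + t) *\<^sub>R (X::real^'n^'n))"
  by (subst mexp_add_commuting[symmetric])
     (simp_all add: matrix_scaleR_left' matrix_scaleR_right' scaleR_add_left)

lemma mexp_inverse:
  fixes X :: "real^'n^'n"
  shows "mexp X ** mexp (- X) = mat 1" "mexp (- X) ** mexp X = mat 1"
  using mexp_scaleR_add[of 1 X "-1"] mexp_scaleR_add[of "-1" X 1] by (simp_all add: mexp_zero)

lemma mexp_invertible: "invertible (mexp (X::real^'n^'n))"
  using mexp_inverse unfolding invertible_def by blast

lemma matrix_inv_mexp: "matrix_inv (mexp (X::real^'n^'n)) = mexp (- X)"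
  by (rule matrix_inv_eq) (simp_all add: mexp_inverse)

lemma mexp_has_vector_derivative:
  "((\<lambda>s. mexp (s *\<^sub>R X)) has_vector_derivative (mexp (t *\<^sub>R X) ** X)) (at t within T)"
proof -
  have "((\<lambda>s. Rep_sqm (exp (s *\<^sub>R Abs_sqm X))) has_vector_derivative Rep_sqm (exp (t *\<^sub>R Abs_sqm X) * Abs_sqm X)) (at t within T)"
    by (rule bounded_linear.has_vector_derivative[OF bounded_linear_Rep_sqm exp_scaleR_has_vector_derivative_right])
  thus ?thesis by (simp add: mexp_sqm Abs_sqm_simps Rep_sqm_simps Abs_sqm_inv)
qed

lemma mexp_has_vector_derivative0:
  "((\<lambda>s. mexp (s *\<^sub>R X)) has_vector_derivative X) (at 0 within T)"
  using mexp_has_vector_derivative[of X 0 T] by (simp add: mexp_zero)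

lemma tendsto_mexp:
  fixes f :: "_ \<Rightarrow> real^'n::finite^'n"
  assumes "(f \<longlongrightarrow> A) F"
  shows "((\<lambda>x. mexp (f x)) \<longlongrightarrow> mexp A) F"
proof -
  have "((\<lambda>x. Abs_sqm (f x) :: 'n::finite sqm) \<longlongrightarrow> Abs_sqm A) F"
    using assms tendsto_Abs_sqm_iff by blast
  hence "((\<lambda>x. exp (Abs_sqm (f x) :: 'n sqm)) \<longlongrightarrow> exp (Abs_sqm A)) F"
    by (rule tendsto_exp_generic)
  thus ?thesis by (simp add: mexp_sqm tendsto_Rep_sqm_iff[symmetric])
qed

lemma mexp_limit:
  fixes E :: "nat \<Rightarrow> real^'n^'n"
  assumes "E \<longlonglongrightarrow> 0" "(\<lambda>n. real (k n) *\<^sub>R E n) \<longlonglongrightarrow> Z"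
  shows "(\<lambda>n. mpow (mat 1 + E n) (k n)) \<longlonglongrightarrow> mexp Z"
proof -
  have a: "(\<lambda>n. Abs_sqm (E n) :: 'n sqm) \<longlonglongrightarrow> 0"
    using tendsto_Abs_sqm_iff[THEN iffD1, OF assms(1)] by (simp add: Abs_sqm_simps)
  have b: "(\<lambda>n. real (k n) *\<^sub>R Abs_sqm (E n) :: 'n sqm) \<longlonglongrightarrow> Abs_sqm Z"
    using tendsto_Abs_sqm_iff[THEN iffD1, OF assms(2)] by (simp add: Abs_sqm_simps)
  have "(\<lambda>n. (1 + Abs_sqm (E n)) ^ (k n) :: 'n sqm) \<longlonglongrightarrow> exp (Abs_sqm Z)"
    by (rule exp_limit_generic[OF a b])
  hence "(\<lambda>n. Rep_sqm ((1 + Abs_sqm (E n)) ^ (k n) :: 'n sqm)) \<longlonglongrightarrow> Rep_sqm (exp (Abs_sqm Z :: 'n sqm))"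
    by (rule tendsto_Rep_sqm_iff[THEN iffD1])
  thus ?thesis
    by (simp add: Rep_sqm_power Rep_sqm_simps Abs_sqm_inv mexp_sqm)
qed

lemma mpow_conj:
  fixes P Q A :: "real^'n^'n"
  assumes "Q ** P = mat 1"
  shows "mpow (P ** A ** Q) k = (if k = 0 then mat 1 else P ** mpow A k ** Q)"
proof (induction k)
  case 0 thus ?case by simp
next
  case (Suc k)
  show ?case
  proof (cases "k = 0")
    case True thus ?thesis by simp
  next
    case False
    have "mpow (P ** A ** Q) (Suc k) = P ** A ** Q ** (P ** mpow A k ** Q)"
      using Suc False by simp
    also have "\<dots> = P ** A ** (Q ** P) ** mpow A k ** Q" by (simp add: matrix_mul_assoc)
    also have "\<dots> = P ** mpow A (Suc k) ** Q" using assms by (simp add: matrix_mul_assoc)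
    finally show ?thesis by simp
  qed
qed

lemma mexp_conj:
  fixes P Q A :: "real^'n^'n"
  assumes "P ** Q = mat 1" "Q ** P = mat 1"
  shows "mexp (P ** A ** Q) = P ** mexp A ** Q"
proof -
  let ?f = "\<lambda>M::real^'n^'n. P ** M ** Q"
  have bl: "bounded_linear ?f"
    using bounded_bilinear.bounded_linear_left[OF bounded_bilinear_mmult]
      bounded_bilinear.bounded_linear_right[OF bounded_bilinear_mmult]
    by (rule bounded_linear_compose)
  have s: "summable (\<lambda>k. (1 / fact k) *\<^sub>R mpow A k)"
  proof -
    have "summable (\<lambda>k. Rep_sqm ((Abs_sqm A :: 'n sqm) ^ k /\<^sub>R fact k))"
      by (rule bounded_linear.summable[OF bounded_linear_Rep_sqm]) (rule summable_exp_generic)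
    thus ?thesis by (simp add: Rep_sqm_power Rep_sqm_simps Abs_sqm_inv divide_inverse_commute)
  qed
  have "P ** mexp A ** Q = (\<Sum>k. ?f ((1 / fact k) *\<^sub>R mpow A k))"
    unfolding mexp_def by (rule bounded_linear.suminf[OF bl s])
  also have "\<dots> = (\<Sum>k. (1 / fact k) *\<^sub>R mpow (P ** A ** Q) k)"
  proof (rule suminf_cong)
    fix k show "?f ((1 / fact k) *\<^sub>R mpow A k) = (1 / fact k) *\<^sub>R mpow (P ** A ** Q) k"
      using assms by (simp add: mpow_conj matrix_scaleR_left' matrix_scaleR_right')
  qed
  finally show ?thesis by (simp add: mexp_def)
qed

lemma deriv_seq:
  fixes f :: "real \<Rightarrow> 'a::real_normed_vector"
  assumes d: "(f has_vector_derivative v) (at 0)" and c: "c \<longlonglongrightarrow> 0" and cnz: "\<And>n. c n \<noteq> 0"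
  shows "(\<lambda>n. (1 / c n) *\<^sub>R (f (c n) - f 0)) \<longlonglongrightarrow> v"
proof -
  let ?g = "\<lambda>y. (f y - f 0 - y *\<^sub>R v) /\<^sub>R norm y"
  have g: "(?g \<longlongrightarrow> 0) (at 0)"
    using d unfolding has_vector_derivative_def has_derivative_at_within by simp
  have cl: "filterlim c (at 0) sequentially"
    by (rule filterlim_atI[OF c]) (simp add: cnz)
  have G0: "(\<lambda>n. ?g (c n)) \<longlonglongrightarrow> 0"
    by (rule filterlim_compose[OF g cl])
  have eq: "(1 / c n) *\<^sub>R (f (c n) - f 0) - v = (norm (c n) / c n) *\<^sub>R ?g (c n)" for n
  proof -
    have "(1 / c n) *\<^sub>R (f (c n) - f 0) - v = (1 / c n) *\<^sub>R (f (c n) - f 0 - c n *\<^sub>R v)"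
      using cnz[of n] by (simp add: algebra_simps)
    also have "\<dots> = (norm (c n) / c n) *\<^sub>R ?g (c n)"
      using cnz[of n] by simp
    finally show ?thesis .
  qed
  have "norm ((1 / c n) *\<^sub>R (f (c n) - f 0) - v) \<le> norm (?g (c n))" for n
  proof -
    have k: "\<bar>norm (c n) / c n\<bar> = 1" using cnz[of n] by (simp add: abs_div)
    show ?thesis unfolding eq norm_scaleR k by simp
  qed
  hence "(\<lambda>n. (1 / c n) *\<^sub>R (f (c n) - f 0) - v) \<longlonglongrightarrow> 0"
    by (intro Lim_null_comparison[OF _ tendsto_norm_zero[OF G0]]) auto
  thus ?thesis by (simp add: Lim_null[symmetric])
qed

lemma mpow_in_group:
  assumes "closed_matrix_group G" "a \<in> G"
  shows "mpow a k \<in> G"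
  using assms by (induction k) (auto simp: closed_matrix_group_def)

lemma scaled_floor_limit:
  fixes c :: "nat \<Rightarrow> real"
  assumes c0: "c \<longlonglongrightarrow> 0" and cpos: "\<And>n. c n > 0" and s: "s \<ge> 0"
  shows "(\<lambda>n. real (nat \<lfloor>s / c n\<rfloor>) * c n) \<longlonglongrightarrow> s"
proof -
  have b: "\<bar>real (nat \<lfloor>s / c n\<rfloor>) * c n - s\<bar> \<le> c n" for n
  proof -
    have f1: "real (nat \<lfloor>s / c n\<rfloor>) = of_int \<lfloor>s / c n\<rfloor>" using s cpos[of n] by simp
    have a1: "of_int \<lfloor>s / c n\<rfloor> \<le> s / c n" "s / c n - 1 < of_int \<lfloor>s / c n\<rfloor>" by linarith+
    have "of_int \<lfloor>s / c n\<rfloor> * c n \<le> s / c n * c n"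
      by (rule mult_right_mono[OF a1(1)]) (use cpos[of n] in simp)
    moreover have "(s / c n - 1) * c n < of_int \<lfloor>s / c n\<rfloor> * c n"
      by (rule mult_strict_right_mono[OF a1(2) cpos])
    ultimately have "of_int \<lfloor>s / c n\<rfloor> * c n \<le> s" "s - c n < of_int \<lfloor>s / c n\<rfloor> * c n"
      using cpos[of n] by (simp_all add: algebra_simps)
    thus ?thesis unfolding f1 by linarith
  qed
  have "(\<lambda>n. real (nat \<lfloor>s / c n\<rfloor>) * c n - s) \<longlonglongrightarrow> 0"
    by (rule Lim_null_comparison[where g=c]) (use b c0 in auto)
  thus ?thesis by (simp add: Lim_null[symmetric])
qed

lemma lie_criterion_seq:
  fixes h :: "nat \<Rightarrow> real^'n^'n"
  assumes c0: "c \<longlonglongrightarrow> 0" and cpos: "\<And>n. c n > 0"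
    and lim: "(\<lambda>n. (1 / c n) *\<^sub>R (h n - mat 1)) \<longlonglongrightarrow> Z" and s: "s \<ge> 0"
  shows "(\<lambda>n. mpow (h n) (nat \<lfloor>s / c n\<rfloor>)) \<longlonglongrightarrow> mexp (s *\<^sub>R Z)"
proof -
  let ?E = "\<lambda>n. h n - mat 1"
  have eq1: "?E n = c n *\<^sub>R ((1 / c n) *\<^sub>R ?E n)" for n using cpos[of n] by simp
  have "(\<lambda>n. c n *\<^sub>R ((1 / c n) *\<^sub>R ?E n)) \<longlonglongrightarrow> 0 *\<^sub>R Z"
    by (intro tendsto_scaleR c0 lim)
  hence E0: "?E \<longlonglongrightarrow> 0" using eq1 by simp
  have eq2: "real (nat \<lfloor>s / c n\<rfloor>) *\<^sub>R ?E n = (real (nat \<lfloor>s / c n\<rfloor>) * c n) *\<^sub>R ((1 / c n) *\<^sub>R ?E n)" for n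
    using cpos[of n] by simp
  have "(\<lambda>n. (real (nat \<lfloor>s / c n\<rfloor>) * c n) *\<^sub>R ((1 / c n) *\<^sub>R ?E n)) \<longlonglongrightarrow> s *\<^sub>R Z"
    by (intro tendsto_scaleR scaled_floor_limit c0 cpos s lim)
  hence "(\<lambda>n. real (nat \<lfloor>s / c n\<rfloor>) *\<^sub>R ?E n) \<longlonglongrightarrow> s *\<^sub>R Z" by (simp only: eq2)
  from mexp_limit[OF E0 this] show ?thesis by simp
qed

lemma lie_criterion:
  fixes h :: "nat \<Rightarrow> real^'n^'n"
  assumes G: "closed_matrix_group G" and hG: "\<And>n. h n \<in> G"
    and c0: "c \<longlonglongrightarrow> 0" and cpos: "\<And>n. c n > 0"
    and lim: "(\<lambda>n. (1 / c n) *\<^sub>R (h n - mat 1)) \<longlonglongrightarrow> Z"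
  shows "Z \<in> lie_alg G"
proof -
  have pos: "mexp (s *\<^sub>R Z) \<in> G" if s: "s \<ge> 0" for s
    by (rule closed_sequentially[OF _ _ lie_criterion_seq[OF c0 cpos lim s]])
       (use G hG mpow_in_group in \<open>auto simp: closed_matrix_group_def\<close>)
  show ?thesis unfolding lie_alg_def
  proof (intro CollectI allI)
    fix s :: real
    show "mexp (s *\<^sub>R Z) \<in> G"
    proof (cases "s \<ge> 0")
      case True thus ?thesis by (rule pos)
    next
      case False
      hence "mexp ((- s) *\<^sub>R Z) \<in> G" by (intro pos) simp
      hence "matrix_inv (mexp ((- s) *\<^sub>R Z)) \<in> G" using G by (simp add: closed_matrix_group_def)
      thus ?thesis by (simp add: matrix_inv_mexp)
    qed
  qed
qed

lemma pmpow_in_group: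
  assumes "closed_pair_group U" "(a, b) \<in> U"
  shows "(mpow a k, mpow b k) \<in> U"
proof (induction k)
  case 0 thus ?case using assms by (simp add: closed_pair_group_def)
next
  case (Suc k)
  thus ?case using assms unfolding closed_pair_group_def by fastforce
qed

lemma lie_criterion_pair:
  fixes h :: "nat \<Rightarrow> 'n::finite mat \<times> 'n mat"
  assumes U: "closed_pair_group U" and hU: "\<And>n. h n \<in> U"
    and c0: "c \<longlonglongrightarrow> 0" and cpos: "\<And>n. c n > 0"
    and lim1: "(\<lambda>n. (1 / c n) *\<^sub>R (fst (h n) - mat 1)) \<longlonglongrightarrow> Z1"
    and lim2: "(\<lambda>n. (1 / c n) *\<^sub>R (snd (h n) - mat 1)) \<longlonglongrightarrow> Z2"
  shows "(Z1, Z2) \<in> lie_alg_pair U"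
proof -
  have pos: "(mexp (s *\<^sub>R Z1), mexp (s *\<^sub>R Z2)) \<in> U" if s: "s \<ge> 0" for s
  proof (rule closed_sequentially[where f="\<lambda>n. (mpow (fst (h n)) (nat \<lfloor>s / c n\<rfloor>), mpow (snd (h n)) (nat \<lfloor>s / c n\<rfloor>))"])
    show "closed U" using U by (simp add: closed_pair_group_def)
    show "(mpow (fst (h n)) (nat \<lfloor>s / c n\<rfloor>), mpow (snd (h n)) (nat \<lfloor>s / c n\<rfloor>)) \<in> U" for n
      using pmpow_in_group[OF U, of "fst (h n)" "snd (h n)"] hU[of n] by simp
    show "(\<lambda>n. (mpow (fst (h n)) (nat \<lfloor>s / c n\<rfloor>), mpow (snd (h n)) (nat \<lfloor>s / c n\<rfloor>)))
        \<longlonglongrightarrow> (mexp (s *\<^sub>R Z1), mexp (s *\<^sub>R Z2))"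
      by (intro tendsto_Pair lie_criterion_seq[OF c0 cpos lim1 s] lie_criterion_seq[OF c0 cpos lim2 s])
  qed
  show ?thesis unfolding lie_alg_pair_def
  proof (clarify)
    fix s :: real
    show "(mexp (s *\<^sub>R Z1), mexp (s *\<^sub>R Z2)) \<in> U"
    proof (cases "s \<ge> 0")
      case True thus ?thesis by (rule pos)
    next
      case False
      hence "(mexp ((- s) *\<^sub>R Z1), mexp ((- s) *\<^sub>R Z2)) \<in> U" by (intro pos) simp
      hence "(matrix_inv (mexp ((- s) *\<^sub>R Z1)), matrix_inv (mexp ((- s) *\<^sub>R Z2))) \<in> U"
        using U unfolding closed_pair_group_def by fast
      thus ?thesis by (simp add: matrix_inv_mexp)
    qed
  qed
qed

lemma cseq: "(\<lambda>n. 1 / (real n + 1)) \<longlonglongrightarrow> 0" "\<And>n. 1 / (real n + 1) > 0" "\<And>n. 1 / (real n + 1) \<noteq> 0"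
proof -
  show "(\<lambda>n. 1 / (real n + 1)) \<longlonglongrightarrow> 0"
    using LIMSEQ_inverse_real_of_nat by (simp add: inverse_eq_divide add.commute)
  show "\<And>n. 1 / (real n + 1) > 0" by simp
  thus "\<And>n. 1 / (real n + 1) \<noteq> 0" by simp
qed

lemma mmult_has_vector_derivative:
  fixes f g :: "real \<Rightarrow> real^'n^'n"
  assumes "(f has_vector_derivative f') (at x within s)" "(g has_vector_derivative g') (at x within s)"
  shows "((\<lambda>x. f x ** g x) has_vector_derivative (f x ** g' + f' ** g x)) (at x within s)"
  by (rule bounded_bilinear.has_vector_derivative[OF bounded_bilinear_mmult assms])

lemma group_mult: "closed_matrix_group G \<Longrightarrow> a \<in> G \<Longrightarrow> b \<in> G \<Longrightarrow> a ** b \<in> G"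
  unfolding closed_matrix_group_def by blast

lemma group_inv: "closed_matrix_group G \<Longrightarrow> a \<in> G \<Longrightarrow> matrix_inv a \<in> G"
  unfolding closed_matrix_group_def by blast

lemma group_invertible: "closed_matrix_group G \<Longrightarrow> a \<in> G \<Longrightarrow> invertible a"
  unfolding closed_matrix_group_def by blast

lemma group_one: "closed_matrix_group G \<Longrightarrow> mat 1 \<in> G"
  unfolding closed_matrix_group_def by blast

lemma lie_exp: "X \<in> lie_alg G \<Longrightarrow> mexp (s *\<^sub>R X) \<in> G"
  unfolding lie_alg_def by blast

lemma lie_zero: "closed_matrix_group G \<Longrightarrow> 0 \<in> lie_alg G"
  by (simp add: lie_alg_def mexp_zero closed_matrix_group_def)

lemma lie_scale: "X \<in> lie_alg G \<Longrightarrow> c *\<^sub>R X \<in> lie_alg G"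
  by (simp add: lie_alg_def)

lemma lie_add:
  assumes G: "closed_matrix_group G" and X: "X \<in> lie_alg G" and Y: "Y \<in> lie_alg G"
  shows "X + Y \<in> lie_alg G"
proof -
  let ?f = "\<lambda>s. mexp (s *\<^sub>R X) ** mexp (s *\<^sub>R Y)"
  let ?c = "\<lambda>n::nat. 1 / (real n + 1)"
  have d: "(?f has_vector_derivative (X + Y)) (at 0)"
    using mmult_has_vector_derivative[OF mexp_has_vector_derivative0[of X] mexp_has_vector_derivative0[of Y]]
    by (simp add: mexp_zero add.commute)
  have "(\<lambda>n. (1 / ?c n) *\<^sub>R (?f (?c n) - ?f 0)) \<longlonglongrightarrow> X + Y"
    by (rule deriv_seq[OF d cseq(1) cseq(3)])
  hence lim: "(\<lambda>n. (1 / ?c n) *\<^sub>R (?f (?c n) - mat 1)) \<longlonglongrightarrow> X + Y"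
    by (simp add: mexp_zero)
  show ?thesis
    by (rule lie_criterion[OF G _ cseq(1) cseq(2) lim])
       (intro group_mult[OF G] lie_exp X Y)
qed

lemma lie_diff:
  assumes "closed_matrix_group G" "X \<in> lie_alg G" "Y \<in> lie_alg G"
  shows "X - Y \<in> lie_alg G"
  using lie_add[OF assms(1,2) lie_scale[OF assms(3), of "-1"]] by simp

lemma lie_subspace: "closed_matrix_group G \<Longrightarrow> subspace (lie_alg G)"
  unfolding subspace_def
proof (intro conjI ballI allI)
  assume G: "closed_matrix_group G"
  show "0 \<in> lie_alg G" by (rule lie_zero[OF G])
  show "x + y \<in> lie_alg G" if "x \<in> lie_alg G" "y \<in> lie_alg G" for x y by (rule lie_add[OF G that])
  show "c *\<^sub>R x \<in> lie_alg G" if "x \<in> lie_alg G" for c x by (rule lie_scale[OF that])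
qed

lemma lie_mono: "K \<subseteq> G \<Longrightarrow> lie_alg K \<subseteq> lie_alg G"
  unfolding lie_alg_def by blast

lemma Ad_lie:
  assumes G: "closed_matrix_group G" and g: "g \<in> G" and X: "X \<in> lie_alg G"
  shows "Ad g X \<in> lie_alg G"
proof -
  have inv: "g ** matrix_inv g = mat 1" "matrix_inv g ** g = mat 1" "matrix_inv g \<in> G"
    using matrix_inv_props[OF group_invertible[OF G g]] group_inv[OF G g] by auto
  have "mexp (s *\<^sub>R (g ** X ** matrix_inv g)) \<in> G" for s
  proof -
    have "mexp (s *\<^sub>R (g ** X ** matrix_inv g)) = mexp (g ** (s *\<^sub>R X) ** matrix_inv g)"
      by (simp add: matrix_scaleR_left' matrix_scaleR_right')
    also have "\<dots> = g ** mexp (s *\<^sub>R X) ** matrix_inv g"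
      by (rule mexp_conj[OF inv(1,2)])
    finally show ?thesis
      using group_mult[OF G group_mult[OF G g lie_exp[OF X]] inv(3)] by simp
  qed
  thus ?thesis unfolding lie_alg_def Ad_def by blast
qed

lemma tangent_space_group:
  assumes G: "closed_matrix_group G" and a: "a \<in> G"
  shows "v \<in> tangent_space G a \<longleftrightarrow> matrix_inv a ** v \<in> lie_alg G"
proof
  have inv: "a ** matrix_inv a = mat 1" "matrix_inv a ** a = mat 1" "matrix_inv a \<in> G"
    using matrix_inv_props[OF group_invertible[OF G a]] group_inv[OF G a] by auto
  assume "v \<in> tangent_space G a"
  then obtain \<gamma> where g0: "\<gamma> 0 = a" and gG: "\<And>s. \<gamma> s \<in> G" and d: "(\<gamma> has_vector_derivative v) (at 0)"
    unfolding tangent_space_def by blast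
  let ?f = "\<lambda>s. matrix_inv a ** \<gamma> s"
  let ?c = "\<lambda>n::nat. 1 / (real n + 1)"
  have bl: "bounded_linear (\<lambda>M. matrix_inv a ** M)"
    by (rule bounded_bilinear.bounded_linear_right[OF bounded_bilinear_mmult])
  have d2: "(?f has_vector_derivative (matrix_inv a ** v)) (at 0)"
    by (rule bounded_linear.has_vector_derivative[OF bl d])
  have "(\<lambda>n. (1 / ?c n) *\<^sub>R (?f (?c n) - ?f 0)) \<longlonglongrightarrow> matrix_inv a ** v"
    by (rule deriv_seq[OF d2 cseq(1) cseq(3)])
  hence lim: "(\<lambda>n. (1 / ?c n) *\<^sub>R (?f (?c n) - mat 1)) \<longlonglongrightarrow> matrix_inv a ** v"
    by (simp add: g0 inv)
  show "matrix_inv a ** v \<in> lie_alg G"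
    by (rule lie_criterion[OF G _ cseq(1) cseq(2) lim])
       (intro group_mult[OF G] gG inv(3))
next
  have inv: "a ** matrix_inv a = mat 1" "matrix_inv a ** a = mat 1"
    using matrix_inv_props[OF group_invertible[OF G a]] by auto
  assume X: "matrix_inv a ** v \<in> lie_alg G"
  let ?X = "matrix_inv a ** v"
  let ?\<gamma> = "\<lambda>s. a ** mexp (s *\<^sub>R ?X)"
  have bl: "bounded_linear (\<lambda>M. a ** M)"
    by (rule bounded_bilinear.bounded_linear_right[OF bounded_bilinear_mmult])
  have "(?\<gamma> has_vector_derivative (a ** ?X)) (at 0)"
    by (rule bounded_linear.has_vector_derivative[OF bl mexp_has_vector_derivative0])
  moreover have "a ** ?X = v" using inv by (simp add: matrix_mul_assoc)
  moreover have "?\<gamma> 0 = a" by (simp add: mexp_zero)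
  moreover have "?\<gamma> s \<in> G" for s
    by (intro group_mult[OF G] a lie_exp X)
  ultimately show "v \<in> tangent_space G a"
    unfolding tangent_space_def by (intro CollectI exI[of _ ?\<gamma>]) auto
qed

lemma tangent_space_Times:
  "tangent_space (A \<times> B) (a, b) = {(v, w). v \<in> tangent_space A a \<and> w \<in> tangent_space B b}"
proof (intro set_eqI iffI)
  fix p assume "p \<in> tangent_space (A \<times> B) (a, b)"
  then obtain \<gamma> where g0: "\<gamma> 0 = (a, b)" and gG: "\<And>s. \<gamma> s \<in> A \<times> B" and d: "(\<gamma> has_vector_derivative p) (at 0)"
    unfolding tangent_space_def by blast
  have d1: "((\<lambda>s. fst (\<gamma> s)) has_vector_derivative fst p) (at 0)"
    by (rule bounded_linear.has_vector_derivative[OF bounded_linear_fst d])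
  have d2: "((\<lambda>s. snd (\<gamma> s)) has_vector_derivative snd p) (at 0)"
    by (rule bounded_linear.has_vector_derivative[OF bounded_linear_snd d])
  have "fst p \<in> tangent_space A a"
    unfolding tangent_space_def
    by (intro CollectI exI[of _ "\<lambda>s. fst (\<gamma> s)"] conjI allI d1) (use g0 gG in \<open>auto simp: mem_Times_iff\<close>)
  moreover have "snd p \<in> tangent_space B b"
    unfolding tangent_space_def
    by (intro CollectI exI[of _ "\<lambda>s. snd (\<gamma> s)"] conjI allI d2) (use g0 gG in \<open>auto simp: mem_Times_iff\<close>)
  ultimately show "p \<in> {(v, w). v \<in> tangent_space A a \<and> w \<in> tangent_space B b}"
    by (cases p) simp
next
  fix p assume "p \<in> {(v, w). v \<in> tangent_space A a \<and> w \<in> tangent_space B b}"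
  then obtain v w where p: "p = (v, w)" and v: "v \<in> tangent_space A a" and w: "w \<in> tangent_space B b"
    by blast
  obtain \<gamma>1 where 1: "\<gamma>1 0 = a" "\<And>s. \<gamma>1 s \<in> A" "(\<gamma>1 has_vector_derivative v) (at 0)"
    using v unfolding tangent_space_def by blast
  obtain \<gamma>2 where 2: "\<gamma>2 0 = b" "\<And>s. \<gamma>2 s \<in> B" "(\<gamma>2 has_vector_derivative w) (at 0)"
    using w unfolding tangent_space_def by blast
  have "((\<lambda>s. (\<gamma>1 s, \<gamma>2 s)) has_vector_derivative (v, w)) (at 0)"
    by (rule has_vector_derivative_Pair[OF 1(3) 2(3)])
  thus "p \<in> tangent_space (A \<times> B) (a, b)"
    unfolding tangent_space_def p
    by (intro CollectI exI[of _ "\<lambda>s. (\<gamma>1 s, \<gamma>2 s)"] conjI allI) (use 1 2 in auto)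
qed

lemma span_insert_redundant: "a \<in> span S \<Longrightarrow> span (insert a S) = span S"
proof -
  assume a: "a \<in> span S"
  have "x \<in> span S" if "x - k *\<^sub>R a \<in> span S" for x k
  proof -
    have "x = (x - k *\<^sub>R a) + k *\<^sub>R a" by simp
    thus ?thesis using span_add[OF that span_scale[OF a]] by metis
  qed
  moreover have "x - 0 *\<^sub>R a \<in> span S" if "x \<in> span S" for x using that by simp
  ultimately show ?thesis unfolding span_insert by blast
qed

lemma proj_exists_span:
  fixes B :: "'a::real_vector \<Rightarrow> 'a \<Rightarrow> real"
  assumes g: "subspace g" and B: "bilinear B" and pos: "\<forall>X\<in>g. X \<noteq> 0 \<longrightarrow> B X X > 0"
    and fin: "finite S" and Sg: "S \<subseteq> g"
  shows "\<forall>X\<in>g. \<exists>Y\<in>span S. \<forall>Z\<in>span S. B (X - Y) Z = 0"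
  using fin Sg
proof (induction S rule: finite_induct)
  case empty
  show ?case by (auto simp: bilinear_rzero[OF B])
next
  case (insert a S)
  have ag: "a \<in> g" and Sg: "S \<subseteq> g" using insert.prems by auto
  have IH: "\<forall>X\<in>g. \<exists>Y\<in>span S. \<forall>Z\<in>span S. B (X - Y) Z = 0" by (rule insert.IH[OF Sg])
  have spg: "span S \<subseteq> g" by (rule span_minimal[OF Sg g])
  obtain Ya where Ya: "Ya \<in> span S" "\<forall>Z\<in>span S. B (a - Ya) Z = 0" using IH ag by blast
  define a' where "a' = a - Ya"
  have a'g: "a' \<in> g" unfolding a'_def using ag Ya(1) spg g by (simp add: subspace_diff subset_iff)
  have a'sp: "a' \<in> span (insert a S)"
  proof -
    have "Ya \<in> span (insert a S)" using span_mono[OF subset_insertI[of S a]] Ya(1) by blast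
    moreover have "a \<in> span (insert a S)" by (rule span_base) simp
    ultimately show ?thesis unfolding a'_def by (rule span_diff[rotated])
  qed
  show ?case
  proof (cases "a' = 0")
    case True
    hence "a \<in> span S" using Ya(1) by (simp add: a'_def)
    hence "span (insert a S) = span S" by (rule span_insert_redundant)
    thus ?thesis using IH by simp
  next
    case False
    have Bpos: "B a' a' \<noteq> 0" using pos a'g False by fastforce
    show ?thesis
    proof
      fix X assume Xg: "X \<in> g"
      obtain YX where YX: "YX \<in> span S" "\<forall>Z\<in>span S. B (X - YX) Z = 0" using IH Xg by blast
      define c where "c = B (X - YX) a' / B a' a'"
      define Y where "Y = YX + c *\<^sub>R a'"
      have "YX \<in> span (insert a S)" using span_mono[OF subset_insertI[of S a]] YX(1) by blast
      hence "Y \<in> span (insert a S)"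
        unfolding Y_def by (intro span_add span_scale a'sp)
      moreover have "B (X - Y) Z = 0" if Z: "Z \<in> span (insert a S)" for Z
      proof -
        obtain k where k: "Z - k *\<^sub>R a \<in> span S" using Z by (auto simp: span_insert)
        define z' where "z' = Z - k *\<^sub>R a + k *\<^sub>R Ya"
        have z': "z' \<in> span S" unfolding z'_def by (intro span_add k span_scale Ya(1))
        have Zeq: "Z = z' + k *\<^sub>R a'" by (simp add: z'_def a'_def algebra_simps)
        have h1: "B (X - YX) z' = 0" using YX(2) z' by blast
        have h2: "B a' z' = 0" using Ya(2) z' by (simp add: a'_def)
        have h3: "B (X - YX) a' - c * B a' a' = 0" using Bpos by (simp add: c_def)
        have e1: "X - Y = (X - YX) - c *\<^sub>R a'" by (simp add: Y_def)
        have "B ((X - YX) - c *\<^sub>R a') (z' + k *\<^sub>R a') = B (X - YX) (z' + k *\<^sub>R a') - c * B a' (z' + k *\<^sub>R a')"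
          by (simp only: bilinear_lsub[OF B] bilinear_lmul[OF B] real_scaleR_def)
        also have "\<dots> = (B (X - YX) z' + k * B (X - YX) a') - c * (B a' z' + k * B a' a')"
          by (simp only: bilinear_radd[OF B] bilinear_rmul[OF B] real_scaleR_def)
        also have "\<dots> = B (X - YX) z' - c * B a' z' + k * (B (X - YX) a' - c * B a' a')"
          by (simp add: right_diff_distrib distrib_left)
        finally have "B (X - Y) Z = B (X - YX) z' - c * B a' z' + k * (B (X - YX) a' - c * B a' a')"
          unfolding Zeq e1 .
        thus ?thesis using h1 h2 h3 by simp
      qed
      ultimately show "\<exists>Y\<in>span (insert a S). \<forall>Z\<in>span (insert a S). B (X - Y) Z = 0" by blast
    qed
  qed
qed

locale cheeger_ctx =
  fixes B :: "'n::finite mat \<Rightarrow> 'n mat \<Rightarrow> real" and g k :: "'n mat set" and t :: real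
  assumes gs: "subspace g" and ks: "subspace k" and kg: "k \<subseteq> g"
    and B: "bilinear B" and pos: "\<forall>X\<in>g. X \<noteq> 0 \<longrightarrow> B X X > 0" and t: "t > 0"
begin

lemma decomp_unique:
  assumes "Y1 \<in> k" "Y2 \<in> k" "X - Y1 \<in> perp_in B g k" "X - Y2 \<in> perp_in B g k"
  shows "Y1 = Y2"
proof (rule ccontr)
  assume ne: "Y1 \<noteq> Y2"
  have D: "Y1 - Y2 \<in> k" using assms ks by (simp add: subspace_diff)
  hence Dg: "Y1 - Y2 \<in> g" using kg by auto
  have "B (X - Y2) (Y1 - Y2) - B (X - Y1) (Y1 - Y2) = 0"
    using assms D by (simp add: perp_in_def)
  moreover have "B (X - Y2) (Y1 - Y2) - B (X - Y1) (Y1 - Y2) = B (Y1 - Y2) (Y1 - Y2)"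
    by (simp add: bilinear_lsub[OF B, symmetric])
  ultimately have "B (Y1 - Y2) (Y1 - Y2) = 0" by simp
  thus False using pos Dg ne by fastforce
qed

lemma decomp_exists:
  assumes X: "X \<in> g"
  shows "\<exists>Y. Y \<in> k \<and> X - Y \<in> perp_in B g k"
proof -
  obtain S where S: "S \<subseteq> k" "independent S" "k \<subseteq> span S"
    using basis_exists[of k] by metis
  have fin: "finite S" using independent_bound S(2) by blast
  have spk: "span S = k" by (rule span_subspace[OF S(1) S(3) ks])
  obtain Y where Y: "Y \<in> span S" "\<forall>Z\<in>span S. B (X - Y) Z = 0"
    using proj_exists_span[OF gs B pos fin] S(1) kg X by blast
  have "Y \<in> k" using Y spk by simp
  moreover have "X - Y \<in> g" using X \<open>Y \<in> k\<close> kg gs by (simp add: subspace_diff subset_iff)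
  ultimately show ?thesis using Y spk by (auto simp: perp_in_def)
qed

lemma kcomp_props:
  assumes "X \<in> g"
  shows "kcomp B g k X \<in> k" "X - kcomp B g k X \<in> perp_in B g k"
proof -
  have "\<exists>!Y. Y \<in> k \<and> X - Y \<in> perp_in B g k"
  proof (rule ex_ex1I)
    show "\<exists>Y. Y \<in> k \<and> X - Y \<in> perp_in B g k" by (rule decomp_exists[OF assms])
    show "y = z" if "y \<in> k \<and> X - y \<in> perp_in B g k" "z \<in> k \<and> X - z \<in> perp_in B g k" for y z
      using decomp_unique[of y z X] that by blast
  qed
  from theI'[OF this] show "kcomp B g k X \<in> k" "X - kcomp B g k X \<in> perp_in B g k"
    unfolding kcomp_def by auto
qed

lemma kcomp_eq:
  assumes "Q \<in> k" "P \<in> perp_in B g k"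
  shows "kcomp B g k (P + Q) = Q"
proof -
  have Pg: "P \<in> g" using assms by (simp add: perp_in_def)
  have Qg: "Q \<in> g" using assms kg by auto
  have X: "P + Q \<in> g" using Pg Qg gs by (simp add: subspace_add)
  show ?thesis
  proof (rule decomp_unique[OF kcomp_props(1)[OF X] assms(1) kcomp_props(2)[OF X]])
    show "P + Q - Q \<in> perp_in B g k" using assms(2) by simp
  qed
qed

lemma perp_in_scale: "P \<in> perp_in B g k \<Longrightarrow> c *\<^sub>R P \<in> perp_in B g k"
  using gs by (auto simp: perp_in_def subspace_scale bilinear_lmul[OF B])

definition psi :: "'n mat \<Rightarrow> 'n mat" where
  "psi Y = pcomp B g k Y + ((t + 1) / t) *\<^sub>R kcomp B g k Y"

lemma kcomp_in_g: "X \<in> g \<Longrightarrow> kcomp B g k X \<in> g"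
  using kcomp_props(1)[of X] kg by blast

lemma pcomp_in_g: "X \<in> g \<Longrightarrow> pcomp B g k X \<in> g"
  using kcomp_props(2)[of X] unfolding pcomp_def perp_in_def by blast

lemma phi_in: "X \<in> g \<Longrightarrow> cheeger_phi B g k t X \<in> g"
  unfolding cheeger_phi_def
  by (intro subspace_add[OF gs] subspace_scale[OF gs] pcomp_in_g kcomp_in_g)

lemma psi_in: "X \<in> g \<Longrightarrow> psi X \<in> g"
  unfolding psi_def
  by (intro subspace_add[OF gs] subspace_scale[OF gs] pcomp_in_g kcomp_in_g)

lemma psi_phi: "X \<in> g \<Longrightarrow> psi (cheeger_phi B g k t X) = X"
proof -
  assume X: "X \<in> g"
  let ?Q = "kcomp B g k X" and ?P = "X - kcomp B g k X"
  have Q: "?Q \<in> k" and P: "?P \<in> perp_in B g k" using kcomp_props[OF X] by auto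
  have cQ: "(t / (t + 1)) *\<^sub>R ?Q \<in> k" using Q ks by (simp add: subspace_scale)
  have phi: "cheeger_phi B g k t X = ?P + (t / (t + 1)) *\<^sub>R ?Q"
    by (simp add: cheeger_phi_def pcomp_def)
  have kc: "kcomp B g k (cheeger_phi B g k t X) = (t / (t + 1)) *\<^sub>R ?Q"
    unfolding phi by (rule kcomp_eq[OF cQ P])
  have c: "(t + 1) / t * (t / (t + 1)) = 1" using t by simp
  have "psi (cheeger_phi B g k t X) = (cheeger_phi B g k t X - kcomp B g k (cheeger_phi B g k t X))
      + ((t + 1) / t) *\<^sub>R kcomp B g k (cheeger_phi B g k t X)"
    by (simp only: psi_def pcomp_def)
  also have "\<dots> = ?P + ((t + 1) / t * (t / (t + 1))) *\<^sub>R ?Q"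
    unfolding kc unfolding phi by (simp only: add_diff_cancel_right' scaleR_scaleR)
  also have "\<dots> = X" unfolding c by simp
  finally show ?thesis .
qed

lemma phi_psi: "Y \<in> g \<Longrightarrow> cheeger_phi B g k t (psi Y) = Y"
proof -
  assume Y: "Y \<in> g"
  let ?Q = "kcomp B g k Y" and ?P = "Y - kcomp B g k Y"
  have Q: "?Q \<in> k" and P: "?P \<in> perp_in B g k" using kcomp_props[OF Y] by auto
  have cQ: "((t + 1) / t) *\<^sub>R ?Q \<in> k" using Q ks by (simp add: subspace_scale)
  have psi: "psi Y = ?P + ((t + 1) / t) *\<^sub>R ?Q"
    by (simp add: psi_def pcomp_def)
  have kc: "kcomp B g k (psi Y) = ((t + 1) / t) *\<^sub>R ?Q"
    unfolding psi by (rule kcomp_eq[OF cQ P])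
  have c: "t / (t + 1) * ((t + 1) / t) = 1" using t by simp
  have "cheeger_phi B g k t (psi Y) = (psi Y - kcomp B g k (psi Y)) + (t / (t + 1)) *\<^sub>R kcomp B g k (psi Y)"
    by (simp only: cheeger_phi_def pcomp_def)
  also have "\<dots> = ?P + (t / (t + 1) * ((t + 1) / t)) *\<^sub>R ?Q"
    unfolding kc unfolding psi by (simp only: add_diff_cancel_right' scaleR_scaleR)
  also have "\<dots> = Y" unfolding c by simp
  finally show ?thesis .
qed

lemma phi_inj: "inj_on (cheeger_phi B g k t) g"
proof (rule inj_onI)
  fix x y assume "x \<in> g" "y \<in> g" "cheeger_phi B g k t x = cheeger_phi B g k t y"
  hence "psi (cheeger_phi B g k t x) = psi (cheeger_phi B g k t y)" by (simp only:)
  thus "x = y" by (simp only: psi_phi[OF \<open>x \<in> g\<close>] psi_phi[OF \<open>y \<in> g\<close>])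
qed

lemma phi_inv_props:
  assumes "Y \<in> g"
  shows "the_inv_into g (cheeger_phi B g k t) Y \<in> g"
    "cheeger_phi B g k t (the_inv_into g (cheeger_phi B g k t) Y) = Y"
proof -
  have "Y \<in> cheeger_phi B g k t ` g"
    by (rule image_eqI[where x="psi Y"]) (rule phi_psi[OF assms, symmetric], rule psi_in[OF assms])
  thus "the_inv_into g (cheeger_phi B g k t) Y \<in> g"
    "cheeger_phi B g k t (the_inv_into g (cheeger_phi B g k t) Y) = Y"
    by (rule the_inv_into_into[OF phi_inj _ order_refl], rule f_the_inv_into_f[OF phi_inj])
qed

lemma phi_inv_phi: "X \<in> g \<Longrightarrow> the_inv_into g (cheeger_phi B g k t) (cheeger_phi B g k t X) = X"
  by (rule the_inv_into_f_f[OF phi_inj])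

end

lemma tendsto_mmult:
  fixes f g :: "_ \<Rightarrow> real^'n^'n"
  assumes "(f \<longlongrightarrow> a) F" "(g \<longlongrightarrow> b) F"
  shows "((\<lambda>x. f x ** g x) \<longlongrightarrow> a ** b) F"
  using bounded_bilinear.tendsto[OF bounded_bilinear_mmult assms] by simp

lemma expand_identity:
  fixes g P v :: "real^'n^'n"
  shows "c *\<^sub>R (g ** P ** v - P) = (c *\<^sub>R (g - mat 1)) ** P ** v + P ** (c *\<^sub>R (v - mat 1))"
proof -
  have "(g - mat 1) ** P ** v + P ** (v - mat 1) = g ** P ** v - P"
    by (simp add: matrix_diff_rdistrib' matrix_diff_ldistrib')
  hence "c *\<^sub>R (g ** P ** v - P) = c *\<^sub>R ((g - mat 1) ** P ** v + P ** (v - mat 1))" by simp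
  also have "\<dots> = (c *\<^sub>R (g - mat 1)) ** P ** v + P ** (c *\<^sub>R (v - mat 1))"
    by (simp only: scaleR_add_right matrix_scaleR_left' matrix_scaleR_right')
  finally show ?thesis .
qed

lemma expand_lim:
  fixes ga va :: "nat \<Rightarrow> real^'n^'n"
  assumes a: "(\<lambda>n. (1 / l n) *\<^sub>R (ga n - mat 1)) \<longlonglongrightarrow> Z0"
    and b: "(\<lambda>n. (1 / l n) *\<^sub>R (va n - mat 1)) \<longlonglongrightarrow> Z1"
    and vconv: "va \<longlonglongrightarrow> mat 1"
  shows "(\<lambda>n. (1 / l n) *\<^sub>R (ga n ** P ** va n - P)) \<longlonglongrightarrow> Z0 ** P + P ** Z1"
proof -
  have "(\<lambda>n. ((1 / l n) *\<^sub>R (ga n - mat 1)) ** P ** va n + P ** ((1 / l n) *\<^sub>R (va n - mat 1)))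
      \<longlonglongrightarrow> Z0 ** P ** mat 1 + P ** Z1"
    by (intro tendsto_add tendsto_mmult a b vconv tendsto_const)
  thus ?thesis by (simp only: expand_identity matrix_mul_rid)
qed

lemma mexp_half_deriv_seq:
  fixes Z :: "real^'n^'n"
  assumes c0: "c \<longlonglongrightarrow> 0" and cpos: "\<And>n. c n > 0"
  shows "(\<lambda>n. (1 / c n) *\<^sub>R (mexp ((c n / 2) *\<^sub>R (- Z)) - mat 1)) \<longlonglongrightarrow> (1/2) *\<^sub>R (- Z)"
proof -
  have d: "((\<lambda>s. mexp (s *\<^sub>R (- Z))) has_vector_derivative (- Z)) (at 0)"
    by (rule mexp_has_vector_derivative0)
  have c2: "(\<lambda>n. c n / 2) \<longlonglongrightarrow> 0" using tendsto_divide[OF c0 tendsto_const[of 2]] by simp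
  have "(\<lambda>n. (1 / (c n / 2)) *\<^sub>R (mexp ((c n / 2) *\<^sub>R (- Z)) - mexp (0 *\<^sub>R (- Z)))) \<longlonglongrightarrow> - Z"
    by (rule deriv_seq[OF d c2]) (use cpos in \<open>simp add: less_imp_neq[symmetric]\<close>)
  hence "(\<lambda>n. (1/2) *\<^sub>R ((1 / (c n / 2)) *\<^sub>R (mexp ((c n / 2) *\<^sub>R (- Z)) - mat 1))) \<longlonglongrightarrow> (1/2) *\<^sub>R (- Z)"
    by (intro tendsto_scaleR tendsto_const) (simp add: mexp_zero)
  moreover have "(1/2) *\<^sub>R ((1 / (c n / 2)) *\<^sub>R M) = (1 / c n) *\<^sub>R M" for n and M :: "real^'n^'n"
    by simp
  ultimately show ?thesis by simp
qed

lemma core_orbit: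
  fixes g1 :: "'n::finite mat" and gs v1s v2s :: "nat \<Rightarrow> 'n mat" and s :: "nat \<Rightarrow> real"
  assumes G: "closed_matrix_group G" and U: "closed_pair_group U" and g1: "g1 \<in> G"
    and memG: "\<And>n. gs n \<in> G" and memU: "\<And>n. (v1s n, v2s n) \<in> U"
    and s0: "s \<longlonglongrightarrow> 0" and spos: "\<And>n. s n > 0"
    and cg: "gs \<longlonglongrightarrow> mat 1" and cv1: "v1s \<longlonglongrightarrow> mat 1" and cv2: "v2s \<longlonglongrightarrow> mat 1"
    and w1: "(\<lambda>n. (1 / s n) *\<^sub>R (gs n ** g1 ** v1s n - g1)) \<longlonglongrightarrow> w1"
    and w2: "(\<lambda>n. (1 / s n) *\<^sub>R (gs n ** mat 1 ** v2s n - mat 1)) \<longlonglongrightarrow> w2"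
    and minimal: "\<And>n k0 k1 k2. k0 \<in> G \<Longrightarrow> (k1, k2) \<in> U \<Longrightarrow> k0 ** g1 ** k1 = g1 \<Longrightarrow> k0 ** k2 = mat 1 \<Longrightarrow>
        norm (gs n - mat 1, v1s n - mat 1, v2s n - mat 1)
          \<le> norm (gs n ** k0 - mat 1, k1 ** v1s n - mat 1, k2 ** v2s n - mat 1)"
  shows "\<exists>X\<in>lie_alg G. \<exists>V\<in>lie_alg_pair U. w1 = X ** g1 + g1 ** fst V \<and> w2 = X + snd V"
proof -
  define E where "E n = (gs n - mat 1, v1s n - mat 1, v2s n - mat 1)" for n
  define \<mu> where "\<mu> n = norm (E n) + s n" for n
  have \<mu>pos: "\<mu> n > 0" for n using spos[of n] by (simp add: \<mu>_def add_nonneg_pos)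
  define p where "p n = ((1 / \<mu> n) *\<^sub>R E n, s n / \<mu> n)" for n
  have pb: "p n \<in> cball 0 2" for n
  proof -
    have "norm (p n) \<le> norm ((1 / \<mu> n) *\<^sub>R E n) + norm (s n / \<mu> n)"
      unfolding p_def by (rule norm_Pair_le)
    also have "\<dots> = (norm (E n) + s n) / \<mu> n"
      using \<mu>pos[of n] spos[of n] by (simp add: add_divide_distrib)
    also have "\<dots> = 1" using \<mu>pos[of n] by (simp add: \<mu>_def)
    finally show ?thesis by simp
  qed
  obtain l r where lr: "strict_mono r" "(p \<circ> r) \<longlonglongrightarrow> l"
  proof -
    have "\<forall>n. p n \<in> cball 0 2" using pb by blast
    from seq_compactE[OF compact_imp_seq_compact[OF compact_cball] this] show ?thesis using that by blast
  qed
  obtain Zs \<sigma> where l: "l = (Zs, \<sigma>)" by (cases l)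
  have Zlim: "(\<lambda>n. (1 / \<mu> (r n)) *\<^sub>R E (r n)) \<longlonglongrightarrow> Zs"
    using tendsto_fst[OF lr(2)] by (simp add: l p_def o_def)
  have \<sigma>lim: "(\<lambda>n. s (r n) / \<mu> (r n)) \<longlonglongrightarrow> \<sigma>"
    using tendsto_snd[OF lr(2)] by (simp add: l p_def o_def)
  have \<sigma>nn: "\<sigma> \<ge> 0"
    by (rule tendsto_lowerbound[OF \<sigma>lim]) (use spos \<mu>pos in \<open>auto intro!: always_eventually less_imp_le\<close>)
  have sum1: "norm ((1 / \<mu> n) *\<^sub>R E n) + s n / \<mu> n = 1" for n
    using \<mu>pos[of n] spos[of n] by (simp add: \<mu>_def add_divide_distrib[symmetric])
  have "(\<lambda>n. norm ((1 / \<mu> (r n)) *\<^sub>R E (r n)) + s (r n) / \<mu> (r n)) \<longlonglongrightarrow> norm Zs + \<sigma>"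
    by (intro tendsto_add tendsto_norm Zlim \<sigma>lim)
  hence nZ: "norm Zs + \<sigma> = 1" using sum1 by (simp add: LIMSEQ_const_iff)
  define Z0 where "Z0 = fst Zs"
  define Z1 where "Z1 = fst (snd Zs)"
  define Z2 where "Z2 = snd (snd Zs)"
  have Zs_eq: "Zs = (Z0, Z1, Z2)" by (simp add: Z0_def Z1_def Z2_def)
  have L0: "(\<lambda>n. (1 / \<mu> (r n)) *\<^sub>R (gs (r n) - mat 1)) \<longlonglongrightarrow> Z0"
    using tendsto_fst[OF Zlim] by (simp add: E_def Z0_def)
  have L1: "(\<lambda>n. (1 / \<mu> (r n)) *\<^sub>R (v1s (r n) - mat 1)) \<longlonglongrightarrow> Z1"
    using tendsto_fst[OF tendsto_snd[OF Zlim]] by (simp add: E_def Z1_def)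
  have L2: "(\<lambda>n. (1 / \<mu> (r n)) *\<^sub>R (v2s (r n) - mat 1)) \<longlonglongrightarrow> Z2"
    using tendsto_snd[OF tendsto_snd[OF Zlim]] by (simp add: E_def Z2_def)
  have sr0: "(\<lambda>n. s (r n)) \<longlonglongrightarrow> 0" using LIMSEQ_subseq_LIMSEQ[OF s0 lr(1)] by (simp add: o_def)
  have cgr: "(\<lambda>n. gs (r n)) \<longlonglongrightarrow> mat 1" using LIMSEQ_subseq_LIMSEQ[OF cg lr(1)] by (simp add: o_def)
  have cv1r: "(\<lambda>n. v1s (r n)) \<longlonglongrightarrow> mat 1" using LIMSEQ_subseq_LIMSEQ[OF cv1 lr(1)] by (simp add: o_def)
  have cv2r: "(\<lambda>n. v2s (r n)) \<longlonglongrightarrow> mat 1" using LIMSEQ_subseq_LIMSEQ[OF cv2 lr(1)] by (simp add: o_def)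
  have w1r: "(\<lambda>n. (1 / s (r n)) *\<^sub>R (gs (r n) ** g1 ** v1s (r n) - g1)) \<longlonglongrightarrow> w1"
    using LIMSEQ_subseq_LIMSEQ[OF w1 lr(1)] by (simp add: o_def)
  have w2r: "(\<lambda>n. (1 / s (r n)) *\<^sub>R (gs (r n) ** mat 1 ** v2s (r n) - mat 1)) \<longlonglongrightarrow> w2"
    using LIMSEQ_subseq_LIMSEQ[OF w2 lr(1)] by (simp add: o_def)
  show ?thesis
  proof (cases "\<sigma> > 0")
    case True
    have ratio: "(\<lambda>n. \<mu> (r n) / s (r n)) \<longlonglongrightarrow> 1 / \<sigma>"
      using tendsto_inverse[OF \<sigma>lim] True by (simp add: inverse_eq_divide)
    have resc: "(1 / s (r n)) *\<^sub>R M = (\<mu> (r n) / s (r n)) *\<^sub>R ((1 / \<mu> (r n)) *\<^sub>R M)" for n and M :: "'n mat"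
      using \<mu>pos[of "r n"] spos[of "r n"] by simp
    have S0: "(\<lambda>n. (1 / s (r n)) *\<^sub>R (gs (r n) - mat 1)) \<longlonglongrightarrow> (1 / \<sigma>) *\<^sub>R Z0"
      unfolding resc by (intro tendsto_scaleR ratio L0)
    have S1: "(\<lambda>n. (1 / s (r n)) *\<^sub>R (v1s (r n) - mat 1)) \<longlonglongrightarrow> (1 / \<sigma>) *\<^sub>R Z1"
      unfolding resc by (intro tendsto_scaleR ratio L1)
    have S2: "(\<lambda>n. (1 / s (r n)) *\<^sub>R (v2s (r n) - mat 1)) \<longlonglongrightarrow> (1 / \<sigma>) *\<^sub>R Z2"
      unfolding resc by (intro tendsto_scaleR ratio L2)
    have X: "(1 / \<sigma>) *\<^sub>R Z0 \<in> lie_alg G"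
      by (rule lie_criterion[OF G memG sr0 spos S0])
    have V: "((1 / \<sigma>) *\<^sub>R Z1, (1 / \<sigma>) *\<^sub>R Z2) \<in> lie_alg_pair U"
      by (rule lie_criterion_pair[OF U memU sr0 spos]) (use S1 S2 in simp_all)
    have e1: "(\<lambda>n. (1 / s (r n)) *\<^sub>R (gs (r n) ** g1 ** v1s (r n) - g1)) \<longlonglongrightarrow> (1 / \<sigma>) *\<^sub>R Z0 ** g1 + g1 ** ((1 / \<sigma>) *\<^sub>R Z1)"
      by (rule expand_lim[OF S0 S1 cv1r])
    have e2: "(\<lambda>n. (1 / s (r n)) *\<^sub>R (gs (r n) ** mat 1 ** v2s (r n) - mat 1)) \<longlonglongrightarrow> (1 / \<sigma>) *\<^sub>R Z0 ** mat 1 + mat 1 ** ((1 / \<sigma>) *\<^sub>R Z2)"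
      by (rule expand_lim[OF S0 S2 cv2r])
    have "w1 = (1 / \<sigma>) *\<^sub>R Z0 ** g1 + g1 ** ((1 / \<sigma>) *\<^sub>R Z1)" by (rule LIMSEQ_unique[OF w1r e1])
    moreover have "w2 = (1 / \<sigma>) *\<^sub>R Z0 + (1 / \<sigma>) *\<^sub>R Z2" using LIMSEQ_unique[OF w2r e2] by simp
    ultimately show ?thesis using X V
      by (intro bexI[where x="(1 / \<sigma>) *\<^sub>R Z0"] bexI[where x="((1 / \<sigma>) *\<^sub>R Z1, (1 / \<sigma>) *\<^sub>R Z2)"]) simp_all
  next
    case False
    hence \<sigma>0: "\<sigma> = 0" using \<sigma>nn by simp
    hence nZ1: "norm Zs = 1" using nZ by simp
    let ?c = "\<lambda>n. \<mu> (r n)"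
    have cpos: "\<And>n. ?c n > 0" by (rule \<mu>pos)
    have E0: "(\<lambda>n. E (r n)) \<longlonglongrightarrow> 0"
    proof -
      have "(\<lambda>n. (gs (r n) - mat 1, v1s (r n) - mat 1, v2s (r n) - mat 1)) \<longlonglongrightarrow> (mat 1 - mat 1, mat 1 - mat 1, mat 1 - mat 1)"
        by (intro tendsto_Pair tendsto_diff cgr cv1r cv2r tendsto_const)
      thus ?thesis by (simp add: E_def zero_prod_def)
    qed
    have c0: "?c \<longlonglongrightarrow> 0"
    proof -
      have "(\<lambda>n. norm (E (r n)) + s (r n)) \<longlonglongrightarrow> norm (0::'n mat \<times> 'n mat \<times> 'n mat) + 0"
        by (intro tendsto_add tendsto_norm E0 sr0)
      thus ?thesis by (simp add: \<mu>_def)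
    qed
    have Z0G: "Z0 \<in> lie_alg G" by (rule lie_criterion[OF G memG c0 cpos L0])
    have ZU: "(Z1, Z2) \<in> lie_alg_pair U"
      by (rule lie_criterion_pair[OF U memU c0 cpos]) (use L1 L2 in simp_all)
    have resc2: "(1 / ?c n) *\<^sub>R M = (s (r n) / \<mu> (r n)) *\<^sub>R ((1 / s (r n)) *\<^sub>R M)" for n and M :: "'n mat"
      using \<mu>pos[of "r n"] spos[of "r n"] by simp
    have D1: "Z0 ** g1 + g1 ** Z1 = 0"
    proof -
      have a: "(\<lambda>n. (1 / ?c n) *\<^sub>R (gs (r n) ** g1 ** v1s (r n) - g1)) \<longlonglongrightarrow> Z0 ** g1 + g1 ** Z1"
        by (rule expand_lim[OF L0 L1 cv1r])
      have b: "(\<lambda>n. (1 / ?c n) *\<^sub>R (gs (r n) ** g1 ** v1s (r n) - g1)) \<longlonglongrightarrow> \<sigma> *\<^sub>R w1"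
        unfolding resc2 by (intro tendsto_scaleR \<sigma>lim w1r)
      show ?thesis using LIMSEQ_unique[OF a b] \<sigma>0 by simp
    qed
    have D2: "Z0 + Z2 = 0"
    proof -
      have a: "(\<lambda>n. (1 / ?c n) *\<^sub>R (gs (r n) ** mat 1 ** v2s (r n) - mat 1)) \<longlonglongrightarrow> Z0 ** mat 1 + mat 1 ** Z2"
        by (rule expand_lim[OF L0 L2 cv2r])
      have b: "(\<lambda>n. (1 / ?c n) *\<^sub>R (gs (r n) ** mat 1 ** v2s (r n) - mat 1)) \<longlonglongrightarrow> \<sigma> *\<^sub>R w2"
        unfolding resc2 by (intro tendsto_scaleR \<sigma>lim w2r)
      show ?thesis using LIMSEQ_unique[OF a b] \<sigma>0 by simp
    qed
    have ig: "matrix_inv g1 ** g1 = mat 1" "g1 ** matrix_inv g1 = mat 1"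
      using matrix_inv_props[OF group_invertible[OF G g1]] by auto
    have Z1eq: "Z1 = - (matrix_inv g1 ** Z0 ** g1)"
    proof -
      have "g1 ** Z1 = - (Z0 ** g1)" using D1 by (simp add: eq_neg_iff_add_eq_0 add.commute)
      hence "matrix_inv g1 ** (g1 ** Z1) = matrix_inv g1 ** (- (Z0 ** g1))" by simp
      thus ?thesis by (simp add: matrix_mul_assoc ig matrix_neg_right')
    qed
    have Z2eq: "Z2 = - Z0" using D2 by (simp add: eq_neg_iff_add_eq_0 add.commute)
    define k0 where "k0 n = mexp ((?c n / 2) *\<^sub>R (- Z0))" for n
    define k1 where "k1 n = mexp ((?c n / 2) *\<^sub>R (- Z1))" for n
    define k2 where "k2 n = mexp ((?c n / 2) *\<^sub>R (- Z2))" for n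
    have k0G: "k0 n \<in> G" for n
      using lie_exp[OF lie_scale[OF Z0G, of "-1"], of "?c n / 2"] by (simp add: k0_def)
    have k12U: "(k1 n, k2 n) \<in> U" for n
    proof -
      have "(mexp ((- (?c n / 2)) *\<^sub>R Z1), mexp ((- (?c n / 2)) *\<^sub>R Z2)) \<in> U"
        using ZU unfolding lie_alg_pair_def by blast
      moreover have "(- (?c n / 2)) *\<^sub>R Z = (?c n / 2) *\<^sub>R (- Z)" for Z :: "'n mat" by simp
      ultimately show ?thesis unfolding k1_def k2_def by metis
    qed
    have mexp_cancel: "mexp ((- a) *\<^sub>R Z0) ** mexp (a *\<^sub>R Z0) = mat 1" for a
      using mexp_scaleR_add[of "- a" Z0 a] by (simp add: mexp_zero)
    have stab1: "k0 n ** g1 ** k1 n = g1" for n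
    proof -
      let ?a = "?c n / 2"
      have "k1 n = mexp (matrix_inv g1 ** (?a *\<^sub>R Z0) ** g1)"
        unfolding k1_def Z1eq by (simp add: matrix_scaleR_left' matrix_scaleR_right')
      also have "\<dots> = matrix_inv g1 ** mexp (?a *\<^sub>R Z0) ** g1"
        by (rule mexp_conj[OF ig])
      finally have "k0 n ** g1 ** k1 n = k0 n ** (g1 ** matrix_inv g1) ** mexp (?a *\<^sub>R Z0) ** g1"
        by (simp add: matrix_mul_assoc)
      also have "\<dots> = mexp ((- ?a) *\<^sub>R Z0) ** mexp (?a *\<^sub>R Z0) ** g1"
        by (simp add: ig k0_def)
      also have "\<dots> = g1" by (simp only: mexp_cancel matrix_mul_lid)
      finally show ?thesis .
    qed
    have stab2: "k0 n ** k2 n = mat 1" for n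
      unfolding k0_def k2_def Z2eq using mexp_cancel[of "?c n / 2"] by simp
    have kd0: "(\<lambda>n. (1 / ?c n) *\<^sub>R (k0 n - mat 1)) \<longlonglongrightarrow> (1/2) *\<^sub>R (- Z0)"
      unfolding k0_def by (rule mexp_half_deriv_seq[OF c0 cpos])
    have kd1: "(\<lambda>n. (1 / ?c n) *\<^sub>R (k1 n - mat 1)) \<longlonglongrightarrow> (1/2) *\<^sub>R (- Z1)"
      unfolding k1_def by (rule mexp_half_deriv_seq[OF c0 cpos])
    have kd2: "(\<lambda>n. (1 / ?c n) *\<^sub>R (k2 n - mat 1)) \<longlonglongrightarrow> (1/2) *\<^sub>R (- Z2)"
      unfolding k2_def by (rule mexp_half_deriv_seq[OF c0 cpos])
    have kc: "(\<lambda>n. mexp ((?c n / 2) *\<^sub>R (- Z))) \<longlonglongrightarrow> mat 1" for Z :: "'n mat"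
    proof -
      have "(\<lambda>n. (?c n / 2) *\<^sub>R (- Z)) \<longlonglongrightarrow> (0 / 2) *\<^sub>R (- Z)"
        by (intro tendsto_scaleR tendsto_divide c0 tendsto_const) simp
      from tendsto_mexp[OF this] show ?thesis by (simp add: mexp_zero)
    qed
    have T0: "(\<lambda>n. (1 / ?c n) *\<^sub>R (gs (r n) ** mat 1 ** k0 n - mat 1)) \<longlonglongrightarrow> Z0 ** mat 1 + mat 1 ** ((1/2) *\<^sub>R (- Z0))"
      by (rule expand_lim[OF L0 kd0]) (unfold k0_def, rule kc)
    have T1: "(\<lambda>n. (1 / ?c n) *\<^sub>R (k1 n ** mat 1 ** v1s (r n) - mat 1)) \<longlonglongrightarrow> (1/2) *\<^sub>R (- Z1) ** mat 1 + mat 1 ** Z1"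
      by (rule expand_lim[OF kd1 L1 cv1r])
    have T2: "(\<lambda>n. (1 / ?c n) *\<^sub>R (k2 n ** mat 1 ** v2s (r n) - mat 1)) \<longlonglongrightarrow> (1/2) *\<^sub>R (- Z2) ** mat 1 + mat 1 ** Z2"
      by (rule expand_lim[OF kd2 L2 cv2r])
    have "(\<lambda>n. norm ((1 / ?c n) *\<^sub>R (gs (r n) ** mat 1 ** k0 n - mat 1), (1 / ?c n) *\<^sub>R (k1 n ** mat 1 ** v1s (r n) - mat 1),
        (1 / ?c n) *\<^sub>R (k2 n ** mat 1 ** v2s (r n) - mat 1)))
      \<longlonglongrightarrow> norm (Z0 ** mat 1 + mat 1 ** ((1/2) *\<^sub>R (- Z0)), (1/2) *\<^sub>R (- Z1) ** mat 1 + mat 1 ** Z1, (1/2) *\<^sub>R (- Z2) ** mat 1 + mat 1 ** Z2)"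
      by (intro tendsto_norm tendsto_Pair T0 T1 T2)
    moreover have "(Z0 ** mat 1 + mat 1 ** ((1/2) *\<^sub>R (- Z0)), (1/2) *\<^sub>R (- Z1) ** mat 1 + mat 1 ** Z1, (1/2) *\<^sub>R (- Z2) ** mat 1 + mat 1 ** Z2)
        = (1/2) *\<^sub>R Zs"
    proof -
      have h: "Z + (1/2) *\<^sub>R (- Z) = (1/2) *\<^sub>R Z" "(1/2) *\<^sub>R (- Z) + Z = (1/2) *\<^sub>R Z" for Z :: "'n mat"
        by (simp_all add: vec_eq_iff)
      show ?thesis by (simp only: Zs_eq matrix_mul_rid matrix_mul_lid h scaleR_Pair)
    qed
    ultimately have lim_rhs: "(\<lambda>n. norm ((1 / ?c n) *\<^sub>R (gs (r n) ** k0 n - mat 1, k1 n ** v1s (r n) - mat 1, k2 n ** v2s (r n) - mat 1)))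
        \<longlonglongrightarrow> 1/2"
      using nZ1 by simp
    have lim_lhs: "(\<lambda>n. norm ((1 / ?c n) *\<^sub>R E (r n))) \<longlonglongrightarrow> 1"
      using tendsto_norm[OF Zlim] nZ1 by simp
    have le: "norm ((1 / ?c n) *\<^sub>R E (r n)) \<le> norm ((1 / ?c n) *\<^sub>R (gs (r n) ** k0 n - mat 1, k1 n ** v1s (r n) - mat 1, k2 n ** v2s (r n) - mat 1))" for n
    proof -
      have "norm (E (r n)) \<le> norm (gs (r n) ** k0 n - mat 1, k1 n ** v1s (r n) - mat 1, k2 n ** v2s (r n) - mat 1)"
        unfolding E_def by (rule minimal[OF k0G k12U stab1 stab2])
      hence "norm (E (r n)) / ?c n \<le> norm (gs (r n) ** k0 n - mat 1, k1 n ** v1s (r n) - mat 1, k2 n ** v2s (r n) - mat 1) / ?c n"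
        using cpos[of n] by (simp add: divide_right_mono)
      moreover have "norm ((1 / ?c n) *\<^sub>R E (r n)) = norm (E (r n)) / ?c n"
        using cpos[of n] by (simp only: norm_scaleR) simp
      moreover have "norm ((1 / ?c n) *\<^sub>R (gs (r n) ** k0 n - mat 1, k1 n ** v1s (r n) - mat 1, k2 n ** v2s (r n) - mat 1))
          = norm (gs (r n) ** k0 n - mat 1, k1 n ** v1s (r n) - mat 1, k2 n ** v2s (r n) - mat 1) / ?c n"
        using cpos[of n] by (simp only: norm_scaleR) simp
      ultimately show ?thesis by linarith
    qed
    have "(1::real) \<le> 1/2"
      by (rule LIMSEQ_le[OF lim_lhs lim_rhs]) (use le in blast)
    thus ?thesis by simp
  qed
qed

definition orb_map :: "'n::finite mat \<Rightarrow> 'n mat \<times> 'n mat \<times> 'n mat \<Rightarrow> 'n mat \<times> 'n mat" where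
  "orb_map g1 h = (fst h ** g1 ** fst (snd h), fst h ** mat 1 ** snd (snd h))"

lemma orb_map_tendsto:
  assumes "(hs \<longlongrightarrow> h) F"
  shows "((\<lambda>n. orb_map g1 (hs n)) \<longlongrightarrow> orb_map g1 h) F"
  unfolding orb_map_def
  by (intro tendsto_Pair tendsto_mmult tendsto_fst tendsto_snd assms tendsto_const)

lemma orb_map_continuous: "continuous_on UNIV (orb_map g1)"
  unfolding orb_map_def
  by (intro continuous_on_Pair bounded_bilinear.continuous_on[OF bounded_bilinear_mmult]
      continuous_on_fst continuous_on_snd continuous_on_id continuous_on_const)

lemma pair_group_inv: "closed_pair_group U \<Longrightarrow> (a, b) \<in> U \<Longrightarrow> (matrix_inv a, matrix_inv b) \<in> U"
  unfolding closed_pair_group_def by blast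

lemma pair_group_invertible: "closed_pair_group U \<Longrightarrow> (a, b) \<in> U \<Longrightarrow> invertible a \<and> invertible b"
  unfolding closed_pair_group_def by blast

lemma pair_group_mult: "closed_pair_group U \<Longrightarrow> (a, b) \<in> U \<Longrightarrow> (c, d) \<in> U \<Longrightarrow> (a ** c, b ** d) \<in> U"
  unfolding closed_pair_group_def by blast

lemma orbit_in_orb_map:
  assumes U: "closed_pair_group U" and y: "y \<in> orbit G U (g1, mat 1)"
  shows "\<exists>h \<in> G \<times> U. orb_map g1 h = y"
proof -
  obtain g u where gu: "g \<in> G" "u \<in> U" "y = act g u (g1, mat 1)"
    using y unfolding orbit_def by blast
  obtain u1 u2 where u: "u = (u1, u2)" by (cases u)
  have "(matrix_inv u1, matrix_inv u2) \<in> U" using pair_group_inv[OF U] gu(2) u by simp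
  moreover have "orb_map g1 (g, matrix_inv u1, matrix_inv u2) = y"
    using gu u by (simp add: orb_map_def act_def)
  ultimately show ?thesis using gu(1) by force
qed

lemma orbit_tangent:
  fixes g1 :: "'n::finite mat"
  assumes G: "closed_matrix_group G" and cG: "compact G" and U: "closed_pair_group U" and cU: "compact U"
    and g1: "g1 \<in> G"
    and w: "w \<in> tangent_space (orbit G U (g1, mat 1)) (g1, mat 1)"
  shows "\<exists>X\<in>lie_alg G. \<exists>V\<in>lie_alg_pair U. fst w = X ** g1 + g1 ** fst V \<and> snd w = X + snd V"
proof -
  let ?x0 = "(g1, mat 1) :: 'n mat \<times> 'n mat"
  let ?one = "(mat 1, mat 1, mat 1) :: 'n mat \<times> 'n mat \<times> 'n mat"
  obtain \<gamma> where g0: "\<gamma> 0 = ?x0" and gO: "\<And>s. \<gamma> s \<in> orbit G U ?x0" and d: "(\<gamma> has_vector_derivative w) (at 0)"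
    using w unfolding tangent_space_def by blast
  define s where "s n = 1 / (real n + 1)" for n
  have s0: "s \<longlonglongrightarrow> 0" and spos: "\<And>n. s n > 0" and snz: "\<And>n. s n \<noteq> 0"
    using cseq unfolding s_def by auto
  define y where "y n = \<gamma> (s n)" for n
  have ylim: "(\<lambda>n. (1 / s n) *\<^sub>R (y n - ?x0)) \<longlonglongrightarrow> w"
    using deriv_seq[OF d s0 snz] by (simp add: y_def g0)
  have yconv: "y \<longlonglongrightarrow> ?x0"
  proof -
    have "(\<lambda>n. s n *\<^sub>R ((1 / s n) *\<^sub>R (y n - ?x0))) \<longlonglongrightarrow> 0 *\<^sub>R w"
      by (intro tendsto_scaleR s0 ylim)
    hence "(\<lambda>n. y n - ?x0) \<longlonglongrightarrow> 0" using snz by simp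
    hence "(\<lambda>n. (y n - ?x0) + ?x0) \<longlonglongrightarrow> 0 + ?x0" by (intro tendsto_add tendsto_const)
    thus ?thesis by simp
  qed
  define fib where "fib n = (G \<times> U) \<inter> {h. orb_map g1 h = y n}" for n
  have cGU: "compact (G \<times> U)" by (rule compact_Times[OF cG cU])
  have fib_compact: "compact (fib n)" for n
    unfolding fib_def
    by (rule compact_Int_closed[OF cGU closed_Collect_eq[OF orb_map_continuous continuous_on_const]])
  have fib_ne: "fib n \<noteq> {}" for n
    using orbit_in_orb_map[OF U gO[of "s n"]] by (auto simp: fib_def y_def)
  have cont: "continuous_on (fib n) (\<lambda>h. norm (h - ?one))" for n
    by (intro continuous_on_norm continuous_on_diff continuous_on_id continuous_on_const)
  have ex: "\<forall>n. \<exists>h. h \<in> fib n \<and> (\<forall>h'\<in>fib n. norm (h - ?one) \<le> norm (h' - ?one))"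
    using continuous_attains_inf[OF fib_compact fib_ne cont] by blast
  obtain hs where hsP: "\<forall>n. hs n \<in> fib n \<and> (\<forall>h'\<in>fib n. norm (hs n - ?one) \<le> norm (h' - ?one))"
    using choice[OF ex] by blast
  have hs: "\<And>n. hs n \<in> fib n" using hsP by blast
  have hmin: "\<And>n h'. h' \<in> fib n \<Longrightarrow> norm (hs n - ?one) \<le> norm (h' - ?one)" using hsP by blast
  have hsGU: "hs n \<in> G \<times> U" and hsy: "orb_map g1 (hs n) = y n" for n
    using hs[of n] by (auto simp: fib_def)
  have modfib: "(fst (hs n) ** k0, k1 ** fst (snd (hs n)), k2 ** snd (snd (hs n))) \<in> fib n"
    if k: "k0 \<in> G" "(k1, k2) \<in> U" "k0 ** g1 ** k1 = g1" "k0 ** k2 = mat 1" for n k0 k1 k2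
  proof -
    obtain g a b where h: "hs n = (g, a, b)" by (cases "hs n") auto
    have gab: "g \<in> G" "(a, b) \<in> U" using hsGU[of n] h by auto
    have "g ** k0 \<in> G" by (rule group_mult[OF G gab(1) k(1)])
    moreover have "(k1 ** a, k2 ** b) \<in> U" by (rule pair_group_mult[OF U k(2) gab(2)])
    moreover have "g ** k0 ** g1 ** (k1 ** a) = g ** g1 ** a"
    proof -
      have "g ** k0 ** g1 ** (k1 ** a) = g ** (k0 ** g1 ** k1) ** a" by (simp add: matrix_mul_assoc)
      thus ?thesis using k(3) by simp
    qed
    moreover have "g ** k0 ** mat 1 ** (k2 ** b) = g ** mat 1 ** b"
    proof -
      have "g ** k0 ** mat 1 ** (k2 ** b) = g ** (k0 ** k2) ** b" by (simp add: matrix_mul_assoc)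
      thus ?thesis using k(4) by simp
    qed
    ultimately show ?thesis using hsy[of n] h by (simp add: fib_def orb_map_def)
  qed
  have hconv: "hs \<longlonglongrightarrow> ?one"
  proof (rule ccontr)
    assume "\<not> hs \<longlonglongrightarrow> ?one"
    then obtain \<epsilon> where \<epsilon>: "\<epsilon> > 0" "\<not> eventually (\<lambda>n. dist (hs n) ?one < \<epsilon>) sequentially"
      unfolding tendsto_iff by blast
    have "infinite {n. \<not> dist (hs n) ?one < \<epsilon>}"
      using \<epsilon>(2) unfolding cofinite_eq_sequentially[symmetric] eventually_cofinite .
    from infinite_enumerate[OF this]
    obtain r :: "nat \<Rightarrow> nat" where r0: "strict_mono r \<and> (\<forall>n. r n \<in> {n. \<not> dist (hs n) ?one < \<epsilon>})"
      by (rule exE)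
    have r: "strict_mono r" "\<And>n. \<epsilon> \<le> norm (hs (r n) - ?one)"
      using r0 by (auto simp: dist_norm not_less)
    have "\<forall>n. (hs \<circ> r) n \<in> G \<times> U" using hsGU by simp
    from seq_compactE[OF compact_imp_seq_compact[OF cGU] this]
    obtain hstar q where q: "hstar \<in> G \<times> U" "strict_mono q" "((hs \<circ> r) \<circ> q) \<longlonglongrightarrow> hstar"
      by blast
    define R where "R = r \<circ> q"
    have R: "strict_mono R" unfolding R_def by (rule strict_mono_o[OF r(1) q(2)])
    have hR: "(\<lambda>n. hs (R n)) \<longlonglongrightarrow> hstar" using q(3) by (simp add: R_def o_def)
    have "(\<lambda>n. orb_map g1 (hs (R n))) \<longlonglongrightarrow> orb_map g1 hstar" by (rule orb_map_tendsto[OF hR])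
    moreover have "(\<lambda>n. orb_map g1 (hs (R n))) \<longlonglongrightarrow> ?x0"
      using LIMSEQ_subseq_LIMSEQ[OF yconv R] by (simp add: hsy o_def)
    ultimately have stab: "orb_map g1 hstar = ?x0" by (rule LIMSEQ_unique)
    obtain gs as bs where hst: "hstar = (gs, as, bs)" by (cases hstar) auto
    have gab: "gs \<in> G" "(as, bs) \<in> U" using q(1) hst by auto
    have eq1: "gs ** g1 ** as = g1" and eq2: "gs ** bs = mat 1"
      using stab hst by (simp_all add: orb_map_def)
    note ig = matrix_inv_props[OF group_invertible[OF G gab(1)]]
    have inv_ab: "invertible as" "invertible bs" using pair_group_invertible[OF U gab(2)] by auto
    note ia = matrix_inv_props[OF inv_ab(1)]
    have bsgs: "bs ** gs = mat 1" using eq2 matrix_left_right_inverse by blast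
    have ibs: "matrix_inv bs = gs" by (rule matrix_inv_eq[OF bsgs eq2])
    let ?k0 = "matrix_inv gs" and ?k1 = "matrix_inv as" and ?k2 = "matrix_inv bs"
    have k0G: "?k0 \<in> G" by (rule group_inv[OF G gab(1)])
    have k12U: "(?k1, ?k2) \<in> U" by (rule pair_group_inv[OF U gab(2)])
    have st1: "?k0 ** g1 ** ?k1 = g1"
    proof -
      have "?k0 ** g1 ** ?k1 = ?k0 ** (gs ** g1 ** as) ** ?k1" using eq1 by simp
      also have "\<dots> = (?k0 ** gs) ** g1 ** (as ** ?k1)" by (simp add: matrix_mul_assoc)
      also have "\<dots> = g1" using ig ia by simp
      finally show ?thesis .
    qed
    have st2: "?k0 ** ?k2 = mat 1" using ig by (simp add: ibs)
    define h' where "h' n = (fst (hs n) ** ?k0, ?k1 ** fst (snd (hs n)), ?k2 ** snd (snd (hs n)))" for n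
    have h'lim: "(\<lambda>n. h' (R n)) \<longlonglongrightarrow> (gs ** ?k0, ?k1 ** as, ?k2 ** bs)"
    proof -
      have hR': "(\<lambda>n. hs (R n)) \<longlonglongrightarrow> (gs, as, bs)" using hR hst by simp
      have c0: "(\<lambda>n. fst (hs (R n))) \<longlonglongrightarrow> gs" using tendsto_fst[OF hR'] by simp
      have c1: "(\<lambda>n. fst (snd (hs (R n)))) \<longlonglongrightarrow> as" using tendsto_fst[OF tendsto_snd[OF hR']] by simp
      have c2: "(\<lambda>n. snd (snd (hs (R n)))) \<longlonglongrightarrow> bs" using tendsto_snd[OF tendsto_snd[OF hR']] by simp
      show ?thesis unfolding h'_def
        by (intro tendsto_Pair tendsto_mmult c0 c1 c2 tendsto_const)
    qed
    have "(gs ** ?k0, ?k1 ** as, ?k2 ** bs) = ?one"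
      using ig ia eq2 by (simp add: ibs)
    hence "(\<lambda>n. norm (h' (R n) - ?one)) \<longlonglongrightarrow> norm (?one - ?one)"
      using h'lim by (intro tendsto_norm tendsto_diff tendsto_const) simp
    hence lim0: "(\<lambda>n. norm (h' (R n) - ?one)) \<longlonglongrightarrow> 0" by simp
    have "\<epsilon> \<le> norm (h' (R n) - ?one)" for n
    proof -
      have "R n = r (q n)" by (simp add: R_def)
      hence "\<epsilon> \<le> norm (hs (R n) - ?one)" using r(2) by simp
      also have "\<dots> \<le> norm (h' (R n) - ?one)"
        unfolding h'_def by (rule hmin[OF modfib[OF k0G k12U st1 st2]])
      finally show ?thesis .
    qed
    hence "\<epsilon> \<le> 0" by (intro tendsto_lowerbound[OF lim0] always_eventually) auto
    thus False using \<epsilon>(1) by simp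
  qed
  define gs where "gs n = fst (hs n)" for n
  define v1s where "v1s n = fst (snd (hs n))" for n
  define v2s where "v2s n = snd (snd (hs n))" for n
  have memG: "gs n \<in> G" and memU: "(v1s n, v2s n) \<in> U" for n
    using hsGU[of n] by (auto simp: gs_def v1s_def v2s_def mem_Times_iff)
  have cg: "gs \<longlonglongrightarrow> mat 1" unfolding gs_def using tendsto_fst[OF hconv] by simp
  have cv1: "v1s \<longlonglongrightarrow> mat 1" unfolding v1s_def using tendsto_fst[OF tendsto_snd[OF hconv]] by simp
  have cv2: "v2s \<longlonglongrightarrow> mat 1" unfolding v2s_def using tendsto_snd[OF tendsto_snd[OF hconv]] by simp
  have yeq: "y n = (gs n ** g1 ** v1s n, gs n ** mat 1 ** v2s n)" for n
    using hsy[of n] by (simp add: orb_map_def gs_def v1s_def v2s_def)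
  have w1: "(\<lambda>n. (1 / s n) *\<^sub>R (gs n ** g1 ** v1s n - g1)) \<longlonglongrightarrow> fst w"
    using tendsto_fst[OF ylim] by (simp add: yeq)
  have w2: "(\<lambda>n. (1 / s n) *\<^sub>R (gs n ** mat 1 ** v2s n - mat 1)) \<longlonglongrightarrow> snd w"
    using tendsto_snd[OF ylim] by (simp add: yeq)
  have minimal: "norm (gs n - mat 1, v1s n - mat 1, v2s n - mat 1)
          \<le> norm (gs n ** k0 - mat 1, k1 ** v1s n - mat 1, k2 ** v2s n - mat 1)"
    if "k0 \<in> G" "(k1, k2) \<in> U" "k0 ** g1 ** k1 = g1" "k0 ** k2 = mat 1" for n k0 k1 k2
  proof -
    have "norm (hs n - ?one) \<le> norm ((gs n ** k0, k1 ** v1s n, k2 ** v2s n) - ?one)"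
      using hmin[OF modfib[OF that]] by (simp add: gs_def v1s_def v2s_def)
    moreover have "hs n - ?one = (gs n - mat 1, v1s n - mat 1, v2s n - mat 1)"
      by (simp add: gs_def v1s_def v2s_def prod_eq_iff)
    ultimately show ?thesis by simp
  qed
  show ?thesis
    by (rule core_orbit[OF G U g1 memG memU s0 spos cg cv1 cv2 w1 w2 minimal])
qed

lemma Ad_Ad_inv:
  fixes g :: "'n::finite mat"
  assumes "invertible g"
  shows "Ad g (Ad (matrix_inv g) X) = X" "Ad (matrix_inv g) (Ad g X) = X"
proof -
  note i = matrix_inv_props[OF assms] and ii = invertible_matrix_inv[OF assms]
  have "Ad g (Ad (matrix_inv g) X) = (g ** matrix_inv g) ** X ** (g ** matrix_inv g)"
    unfolding Ad_def ii(2) by (simp add: matrix_mul_assoc)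
  thus "Ad g (Ad (matrix_inv g) X) = X" using i by simp
  have "Ad (matrix_inv g) (Ad g X) = (matrix_inv g ** g) ** X ** (matrix_inv g ** g)"
    unfolding Ad_def ii(2) by (simp add: matrix_mul_assoc)
  thus "Ad (matrix_inv g) (Ad g X) = X" using i by simp
qed

lemma Ad_neg: "Ad g (- X) = - Ad g X"
  unfolding Ad_def by (simp add: matrix_neg_left' matrix_neg_right')

lemma curve_G:
  assumes G: "closed_matrix_group G" and U: "closed_pair_group U" and X: "X \<in> lie_alg G"
  shows "(X ** g1, X) \<in> tangent_space (orbit G U (g1, mat 1)) (g1, mat 1)"
proof -
  let ?\<gamma> = "\<lambda>s. (mexp (s *\<^sub>R X) ** g1, mexp (s *\<^sub>R X))"
  have "?\<gamma> s \<in> orbit G U (g1, mat 1)" for s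
  proof -
    have "act (mexp (s *\<^sub>R X)) (mat 1, mat 1) (g1, mat 1) = ?\<gamma> s"
      by (simp add: act_def matrix_inv_mat1)
    moreover have "(mat 1, mat 1) \<in> U" using U by (simp add: closed_pair_group_def)
    ultimately show ?thesis unfolding orbit_def mem_Collect_eq using lie_exp[OF X]
      by (intro exI[of _ "mexp (s *\<^sub>R X)"] exI[of _ "(mat 1, mat 1)"] conjI) simp_all
  qed
  moreover have "?\<gamma> 0 = (g1, mat 1)" by (simp add: mexp_zero)
  moreover have "(?\<gamma> has_vector_derivative (X ** g1, X)) (at 0)"
  proof (rule has_vector_derivative_Pair)
    show "((\<lambda>s. mexp (s *\<^sub>R X) ** g1) has_vector_derivative X ** g1) (at 0)"
      using mmult_has_vector_derivative[OF mexp_has_vector_derivative0[of X] has_vector_derivative_const[of g1]]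
      by simp
    show "((\<lambda>s. mexp (s *\<^sub>R X)) has_vector_derivative X) (at 0)" by (rule mexp_has_vector_derivative0)
  qed
  ultimately show ?thesis unfolding tangent_space_def
    by (intro CollectI exI[of _ ?\<gamma>] conjI allI) auto
qed

lemma curve_U:
  assumes U: "closed_pair_group U" and G: "closed_matrix_group G" and V: "(V1, V2) \<in> lie_alg_pair U"
  shows "(g1 ** (- V1), - V2) \<in> tangent_space (orbit G U (g1, mat 1)) (g1, mat 1)"
proof -
  let ?\<gamma> = "\<lambda>s. (g1 ** mexp (s *\<^sub>R (- V1)), mexp (s *\<^sub>R (- V2)))"
  have "?\<gamma> s \<in> orbit G U (g1, mat 1)" for s
  proof -
    have "act (mat 1) (mexp (s *\<^sub>R V1), mexp (s *\<^sub>R V2)) (g1, mat 1) = ?\<gamma> s"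
      by (simp add: act_def matrix_inv_mexp)
    moreover have "(mexp (s *\<^sub>R V1), mexp (s *\<^sub>R V2)) \<in> U" using V by (simp add: lie_alg_pair_def)
    moreover have "mat 1 \<in> G" by (rule group_one[OF G])
    ultimately show ?thesis unfolding orbit_def mem_Collect_eq
      by (intro exI[of _ "mat 1"] exI[of _ "(mexp (s *\<^sub>R V1), mexp (s *\<^sub>R V2))"] conjI) simp_all
  qed
  moreover have "?\<gamma> 0 = (g1, mat 1)" by (simp add: mexp_zero)
  moreover have "(?\<gamma> has_vector_derivative (g1 ** (- V1), - V2)) (at 0)"
  proof (rule has_vector_derivative_Pair)
    show "((\<lambda>s. g1 ** mexp (s *\<^sub>R (- V1))) has_vector_derivative g1 ** (- V1)) (at 0)"
      using mmult_has_vector_derivative[OF has_vector_derivative_const[of g1] mexp_has_vector_derivative0[of "- V1"]]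
      by simp
    show "((\<lambda>s. mexp (s *\<^sub>R (- V2))) has_vector_derivative - V2) (at 0)" by (rule mexp_has_vector_derivative0)
  qed
  ultimately show ?thesis unfolding tangent_space_def
    by (intro CollectI exI[of _ ?\<gamma>] conjI allI) auto
qed

theorem proposition2p2:
  fixes G K :: "'n::finite mat set"
    and U :: "('n mat \<times> 'n mat) set"
    and B :: "'n mat \<Rightarrow> 'n mat \<Rightarrow> real"
    and t :: real and g1 :: "'n mat"
  assumes G: "closed_matrix_group G" "compact G"
    and B_bilinear: "bilinear B"
    and B_sym: "\<forall>X\<in>lie_alg G. \<forall>Y\<in>lie_alg G. B X Y = B Y X"
    and B_pos: "\<forall>X\<in>lie_alg G. X \<noteq> 0 \<longrightarrow> B X X > 0"
    and B_biinv: "\<forall>g\<in>G. \<forall>X\<in>lie_alg G. \<forall>Y\<in>lie_alg G. B (Ad g X) (Ad g Y) = B X Y"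
    and K: "closed_matrix_group K" "K \<subseteq> G"
    and t: "t > 0"
    and U: "closed_pair_group U" "U \<subseteq> K \<times> K"
    and free: "\<forall>u\<in>U. \<forall>g\<in>G. fst u ** g ** matrix_inv (snd u) = g \<longrightarrow> u = (mat 1, mat 1)"
    and g1: "g1 \<in> G"
  shows "(\<lambda>v. (matrix_inv g1 ** fst v, snd v)) ` horizontal B G K t U (g1, mat 1) =
    {(the_inv_into (lie_alg G) (cheeger_phi B (lie_alg G) (lie_alg K) t) (- Ad (matrix_inv g1) X),
      the_inv_into (lie_alg G) (cheeger_phi B (lie_alg G) (lie_alg K) t) X) | X.
      X \<in> lie_alg G \<and> (\<forall>(U1, U2) \<in> lie_alg_pair U. B X (Ad g1 U1 - U2) = 0)}"
proof -
  let ?g = "lie_alg G" and ?k = "lie_alg K"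
  let ?phi = "cheeger_phi B ?g ?k t"
  let ?inv = "the_inv_into ?g ?phi"
  let ?ig = "matrix_inv g1"
  have gsub: "subspace ?g" by (rule lie_subspace[OF G(1)])
  have ksub: "subspace ?k" by (rule lie_subspace[OF K(1)])
  have kg: "?k \<subseteq> ?g" by (rule lie_mono[OF K(2)])
  interpret cs: cheeger_ctx B ?g ?k t
    using gsub ksub kg B_bilinear B_pos t by unfold_locales
  have g1inv: "invertible g1" by (rule group_invertible[OF G(1) g1])
  have igG: "?ig \<in> G" by (rule group_inv[OF G(1) g1])
  have iig: "matrix_inv ?ig = g1" by (rule invertible_matrix_inv(2)[OF g1inv])
  note gi = matrix_inv_props[OF g1inv]
  note AdAd = Ad_Ad_inv[OF g1inv]
  have uk: "U1 \<in> ?g \<and> U2 \<in> ?g" if "(U1, U2) \<in> lie_alg_pair U" for U1 U2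
  proof -
    have "(mexp (s *\<^sub>R U1), mexp (s *\<^sub>R U2)) \<in> K \<times> K" for s
      using that U(2) unfolding lie_alg_pair_def by blast
    hence "U1 \<in> ?k \<and> U2 \<in> ?k" unfolding lie_alg_def by blast
    thus ?thesis using kg by blast
  qed
  have closedU: "closed U" using U(1) by (simp add: closed_pair_group_def)
  have cU: "compact U"
  proof -
    have "U = (G \<times> G) \<inter> U" using U(2) K(2) by blast
    thus ?thesis using compact_Int_closed[OF compact_Times[OF G(2) G(2)] closedU] by simp
  qed
  have metric: "metric1_prod B ?g ?k t (g1, mat 1) v w = B (?phi (?ig ** fst v)) (?ig ** fst w) + B (?phi (snd v)) (snd w)" for v w
    by (simp add: metric1_prod_def metric1_def matrix_inv_mat1)
  have TGG: "v \<in> tangent_space (G \<times> G) (g1, mat 1) \<longleftrightarrow> ?ig ** fst v \<in> ?g \<and> snd v \<in> ?g" for v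
    using tangent_space_Times[of G G g1 "mat 1"] tangent_space_group[OF G(1) g1, of "fst v"]
      tangent_space_group[OF G(1) group_one[OF G(1)], of "snd v"]
    by (cases v) (simp add: matrix_inv_mat1)
  have Ad_in: "Ad h X \<in> ?g" if "h \<in> G" "X \<in> ?g" for h X by (rule Ad_lie[OF G(1) that])
  have igX: "?ig ** (X ** g1) = Ad ?ig X" for X
    by (simp add: Ad_def iig matrix_mul_assoc)
  have bi: "B (Ad h X) (Ad h Y) = B X Y" if "h \<in> G" "X \<in> ?g" "Y \<in> ?g" for h X Y
    using B_biinv that by blast
  note bl = bilinear_ladd[OF B_bilinear] bilinear_radd[OF B_bilinear] bilinear_lsub[OF B_bilinear]
    bilinear_rsub[OF B_bilinear] bilinear_lneg[OF B_bilinear] bilinear_rneg[OF B_bilinear]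
  show ?thesis
  proof (intro set_eqI iffI)
    fix z assume "z \<in> (\<lambda>v. (?ig ** fst v, snd v)) ` horizontal B G K t U (g1, mat 1)"
    then obtain v where z: "z = (?ig ** fst v, snd v)" and vh: "v \<in> horizontal B G K t U (g1, mat 1)"
      by blast
    have vT: "v \<in> tangent_space (G \<times> G) (g1, mat 1)"
      and orth: "\<And>w. w \<in> tangent_space (orbit G U (g1, mat 1)) (g1, mat 1) \<Longrightarrow> metric1_prod B ?g ?k t (g1, mat 1) v w = 0"
      using vh unfolding horizontal_def by auto
    define A where "A = ?ig ** fst v"
    define B' where "B' = snd v"
    have Ag: "A \<in> ?g" and B'g: "B' \<in> ?g" using vT TGG by (auto simp: A_def B'_def)
    define Y where "Y = ?phi B'"
    have Yg: "Y \<in> ?g" unfolding Y_def by (rule cs.phi_in[OF B'g])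
    have pA: "?phi A \<in> ?g" by (rule cs.phi_in[OF Ag])
    have a: "B (Ad g1 (?phi A) + Y) X = 0" if X: "X \<in> ?g" for X
    proof -
      have "metric1_prod B ?g ?k t (g1, mat 1) v (X ** g1, X) = 0"
        by (rule orth[OF curve_G[OF G(1) U(1) X]])
      hence "B (?phi A) (Ad ?ig X) + B Y X = 0"
        by (simp add: metric A_def B'_def Y_def igX)
      moreover have "B (?phi A) (Ad ?ig X) = B (Ad g1 (?phi A)) X"
        using bi[OF g1 pA Ad_in[OF igG X]] AdAd(1) by simp
      ultimately show ?thesis by (simp add: bl)
    qed
    have P: "Ad g1 (?phi A) + Y \<in> ?g" using Ad_in[OF g1 pA] Yg gsub by (simp add: subspace_add)
    have "B (Ad g1 (?phi A) + Y) (Ad g1 (?phi A) + Y) = 0" by (rule a[OF P])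
    hence zero: "Ad g1 (?phi A) + Y = 0" using B_pos P by fastforce
    have phiA: "?phi A = - Ad ?ig Y"
    proof -
      have "Ad g1 (?phi A) = - Y" using zero by (simp add: eq_neg_iff_add_eq_0)
      hence "Ad ?ig (Ad g1 (?phi A)) = Ad ?ig (- Y)" by simp
      thus ?thesis using AdAd(2) by (simp add: Ad_neg)
    qed
    have invA: "?inv (- Ad ?ig Y) = A" using cs.phi_inv_phi[OF Ag] phiA by simp
    have invB: "?inv Y = B'" unfolding Y_def by (rule cs.phi_inv_phi[OF B'g])
    have cond: "B Y (Ad g1 U1 - U2) = 0" if U12: "(U1, U2) \<in> lie_alg_pair U" for U1 U2
    proof -
      have U1g: "U1 \<in> ?g" and U2g: "U2 \<in> ?g" using uk[OF U12] by auto
      have "metric1_prod B ?g ?k t (g1, mat 1) v (g1 ** (- U1), - U2) = 0"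
        by (rule orth[OF curve_U[OF U(1) G(1) U12]])
      moreover have "?ig ** (g1 ** (- U1)) = - U1"
        using gi by (simp add: matrix_mul_assoc matrix_neg_right')
      ultimately have "B (- Ad ?ig Y) (- U1) + B Y (- U2) = 0"
        by (simp add: metric A_def[symmetric] B'_def[symmetric] Y_def[symmetric] phiA)
      hence "B (Ad ?ig Y) U1 - B Y U2 = 0" by (simp add: bl)
      moreover have "B (Ad ?ig Y) U1 = B Y (Ad g1 U1)"
        using bi[OF g1 Ad_in[OF igG Yg] U1g] AdAd(1) by simp
      ultimately show ?thesis by (simp add: bl)
    qed
    show "z \<in> {(?inv (- Ad ?ig X), ?inv X) | X. X \<in> ?g \<and> (\<forall>(U1, U2) \<in> lie_alg_pair U. B X (Ad g1 U1 - U2) = 0)}"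
      unfolding mem_Collect_eq
    proof (intro exI[of _ Y] conjI)
      show "z = (?inv (- Ad ?ig Y), ?inv Y)" by (simp add: z invA invB A_def B'_def)
      show "Y \<in> ?g" by (rule Yg)
      show "\<forall>(U1, U2) \<in> lie_alg_pair U. B Y (Ad g1 U1 - U2) = 0" using cond by blast
    qed
  next
    fix z assume "z \<in> {(?inv (- Ad ?ig X), ?inv X) | X. X \<in> ?g \<and> (\<forall>(U1, U2) \<in> lie_alg_pair U. B X (Ad g1 U1 - U2) = 0)}"
    then obtain Y where z: "z = (?inv (- Ad ?ig Y), ?inv Y)" and Yg: "Y \<in> ?g"
      and cond0: "\<forall>(U1, U2) \<in> lie_alg_pair U. B Y (Ad g1 U1 - U2) = 0"
      by blast
    have cond: "B Y (Ad g1 U1 - U2) = 0" if "(U1, U2) \<in> lie_alg_pair U" for U1 U2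
      using cond0 that by blast
    have mY: "- Ad ?ig Y \<in> ?g" using Ad_in[OF igG Yg] gsub by (simp add: subspace_neg)
    define A where "A = ?inv (- Ad ?ig Y)"
    define B' where "B' = ?inv Y"
    have Ag: "A \<in> ?g" and phiA: "?phi A = - Ad ?ig Y" using cs.phi_inv_props[OF mY] by (auto simp: A_def)
    have B'g: "B' \<in> ?g" and phiB: "?phi B' = Y" using cs.phi_inv_props[OF Yg] by (auto simp: B'_def)
    define v where "v = (g1 ** A, B')"
    have igA: "?ig ** (g1 ** A) = A" using gi by (simp add: matrix_mul_assoc)
    have z': "z = (A, B')" by (simp add: z A_def B'_def)
    have zv: "z = (?ig ** fst v, snd v)" by (simp only: z' v_def igA fst_conv snd_conv)
    have vT: "v \<in> tangent_space (G \<times> G) (g1, mat 1)" using TGG Ag B'g by (simp add: v_def igA)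
    have orth: "metric1_prod B ?g ?k t (g1, mat 1) v w = 0"
      if w: "w \<in> tangent_space (orbit G U (g1, mat 1)) (g1, mat 1)" for w
    proof -
      obtain X V where X: "X \<in> ?g" and V: "V \<in> lie_alg_pair U"
        and w1: "fst w = X ** g1 + g1 ** fst V" and w2: "snd w = X + snd V"
        using orbit_tangent[OF G(1) G(2) U(1) cU g1 w] by blast
      obtain V1 V2 where V12: "V = (V1, V2)" by (cases V)
      have V1g: "V1 \<in> ?g" and V2g: "V2 \<in> ?g" using uk V V12 by auto
      have igV: "?ig ** (g1 ** V1) = V1" using gi by (simp add: matrix_mul_assoc)
      have e1: "?ig ** fst w = Ad ?ig X + V1"
        by (simp only: w1 V12 fst_conv matrix_add_ldistrib igX igV)
      have "metric1_prod B ?g ?k t (g1, mat 1) v w = B (- Ad ?ig Y) (Ad ?ig X + V1) + B Y (X + V2)"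
        by (simp add: metric v_def igA phiA phiB e1 w2 V12)
      also have "\<dots> = - B (Ad ?ig Y) (Ad ?ig X) - B (Ad ?ig Y) V1 + B Y X + B Y V2"
        by (simp add: bl)
      also have "B (Ad ?ig Y) (Ad ?ig X) = B Y X" by (rule bi[OF igG Yg X])
      also have "B (Ad ?ig Y) V1 = B Y (Ad g1 V1)"
        using bi[OF g1 Ad_in[OF igG Yg] V1g] AdAd(1) by simp
      also have "- B Y X - B Y (Ad g1 V1) + B Y X + B Y V2 = - B Y (Ad g1 V1 - V2)"
        by (simp add: bl)
      also have "\<dots> = 0" using cond[of V1 V2] V V12 by simp
      finally show ?thesis .
    qed
    have "v \<in> horizontal B G K t U (g1, mat 1)"
      unfolding horizontal_def using vT orth by blast
    thus "z \<in> (\<lambda>v. (?ig ** fst v, snd v)) ` horizontal B G K t U (g1, mat 1)"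
      using zv by blast
  qed
qed

end
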